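(* Let $M$ be a commutative monoid. The free $\mathbb{H}M$-module functor $\mathcal{Z}:\mathbf{Set}\!\downarrow_M\to\mathbb{H}M\text{-}\mathrm{Mod}$ is a symmetric monoidal functor: there are natural and coherent isomorphisms of $\mathbb{H}M$-modules $\mathcal{Z}(S\times T)\cong\mathcal{Z}S\otimes_{\mathbb{H}M}\mathcal{Z}T$ and $\mathcal{Z}\{e\}\cong\mathbb{Z}$, for all sets $S,T$ over $M$.
   Context: Let $M$ be a commutative monoid with identity $e$. $\mathbb{H}M$ has objects the elements of $M$ and morphisms $(x,y):x\to xy$, composition $(xy,z)(x,y)=(x,yz)$; an $\mathbb{H}M$-module $\mathcal{A}$ is a functor $\mathbb{H}M\to\mathbf{Ab}$, i.e. groups $\mathcal{A}(x)$ with $y_*:\mathcal{A}(x)\to\mathcal{A}(xy)$, $y_*z_*=(yz)_*$, $e_*=\mathrm{id}$. The tensor product $(\mathcal{A}\otimes_{\mathbb{H}M}\mathcal{B})(x)$ is the quotient of $\bigoplus_{zt=x}\mathcal{A}(z)\otimes\mathcal{B}(t)$ by the relations $u_*a\otimes b=a\otimes u_*b$ ($a\in\mathcal{A}(v),b\in\mathcal{B}(w),uvw=x$), with $y_*(a\otimes b)=y_*a\otimes b$; this makes $\mathbb{H}M$-modules a symmetric monoidal category with unit $\mathbb{Z}$ ($\mathbb{Z}(x)=\mathbb{Z}$, all $y_*$ the identity). $\mathbf{Set}\!\downarrow_M$ is the category of sets $S$ with a map $\pi:S\to M$, symmetric monoidal with tensor $S\times T$, $\pi(s,t)=\pi(s)\pi(t)$,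 and unit $\{e\}$ with $\pi(e)=e$. For a set $S$ over $M$, $\mathcal{Z}S(x)$ is the free abelian group on pairs $(u,s)\in M\times S$ with $u\,\pi(s)=x$, $y_*(u,s)=(uy,s)$, and $(\mathcal{Z}\varphi)_x(u,s)=(u,\varphi s)$. *)

theory Defs
  imports "HOL-Algebra.Free_Abelian_Groups" "HOL-Algebra.Elementary_Groups" "HOL-Algebra.Coset"
begin

text \<open>The commutative monoid M is the type 'm of class comm_monoid_mult (identity e = 1).
  An HM-module is a family of abelian groups grp x (x in M) together with the maps
  act x y : grp x \<rightarrow> grp (x*y), i.e. y_* on the component at x.\<close>

record ('m, 'a) hmmod =
  grp :: "'m \<Rightarrow> 'a monoid"
  act :: "'m \<Rightarrow> 'm \<Rightarrow> 'a \<Rightarrow> 'a"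

definition hm_module :: "('m::comm_monoid_mult, 'a) hmmod \<Rightarrow> bool" where
  "hm_module A \<longleftrightarrow>
     (\<forall>x. comm_group (grp A x)) \<and>
     (\<forall>x y. act A x y \<in> hom (grp A x) (grp A (x * y))) \<and>
     (\<forall>x y z a. a \<in> carrier (grp A x) \<longrightarrow> act A (x * y) z (act A x y a) = act A x (y * z) a) \<and>
     (\<forall>x a. a \<in> carrier (grp A x) \<longrightarrow> act A x 1 a = a)"

definition hm_hom :: "('m::comm_monoid_mult, 'a) hmmod \<Rightarrow> ('m, 'b) hmmod \<Rightarrow> ('m \<Rightarrow> 'a \<Rightarrow> 'b) \<Rightarrow> bool" where
  "hm_hom A B f \<longleftrightarrow>
     (\<forall>x. f x \<in> hom (grp A x) (grp B x)) \<and>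
     (\<forall>x y a. a \<in> carrier (grp A x) \<longrightarrow> f (x * y) (act A x y a) = act B x y (f x a))"

definition hm_iso :: "('m::comm_monoid_mult, 'a) hmmod \<Rightarrow> ('m, 'b) hmmod \<Rightarrow> ('m \<Rightarrow> 'a \<Rightarrow> 'b) \<Rightarrow> bool" where
  "hm_iso A B f \<longleftrightarrow> hm_hom A B f \<and> (\<forall>x. bij_betw (f x) (carrier (grp A x)) (carrier (grp B x)))"

definition hm_eq :: "('m, 'a) hmmod \<Rightarrow> ('m \<Rightarrow> 'a \<Rightarrow> 'b) \<Rightarrow> ('m \<Rightarrow> 'a \<Rightarrow> 'b) \<Rightarrow> bool" where
  "hm_eq A f g \<longleftrightarrow> (\<forall>x. \<forall>a \<in> carrier (grp A x). f x a = g x a)"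

definition zunit :: "('m::comm_monoid_mult, int) hmmod" where
  "zunit = \<lparr>grp = (\<lambda>x. integer_group), act = (\<lambda>x y n. n)\<rparr>"

text \<open>Tensor product of HM-modules: (A \<otimes> B)(x) is the free abelian group on the
  generators a \<otimes> b (a \<in> A(z), b \<in> B(t), z t = x), recorded as (z,t,a,b), modulo the
  subgroup generated by bilinearity and the relations u_* a \<otimes> b = a \<otimes> u_* b.\<close>

definition tgens :: "('m::comm_monoid_mult, 'a) hmmod \<Rightarrow> ('m, 'b) hmmod \<Rightarrow> 'm \<Rightarrow> ('m \<times> 'm \<times> 'a \<times> 'b) set" where
  "tgens A B x = {(z, t, a, b). z * t = x \<and> a \<in> carrier (grp A z) \<and> b \<in> carrier (grp B t)}"

definition tfree :: "('m::comm_monoid_mult, 'a) hmmod \<Rightarrow> ('m, 'b) hmmod \<Rightarrow> 'm \<Rightarrow> ('m \<times> 'm \<times> 'a \<times> 'b \<Rightarrow>\<^sub>0 int) monoid" where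
  "tfree A B x = free_Abelian_group (tgens A B x)"

definition trelgens :: "('m::comm_monoid_mult, 'a) hmmod \<Rightarrow> ('m, 'b) hmmod \<Rightarrow> 'm \<Rightarrow> ('m \<times> 'm \<times> 'a \<times> 'b \<Rightarrow>\<^sub>0 int) set" where
  "trelgens A B x =
     {frag_of (z, t, a \<otimes>\<^bsub>grp A z\<^esub> a', b) - frag_of (z, t, a, b) - frag_of (z, t, a', b) | z t a a' b.
        z * t = x \<and> a \<in> carrier (grp A z) \<and> a' \<in> carrier (grp A z) \<and> b \<in> carrier (grp B t)}
   \<union> {frag_of (z, t, a, b \<otimes>\<^bsub>grp B t\<^esub> b') - frag_of (z, t, a, b) - frag_of (z, t, a, b') | z t a b b'.
        z * t = x \<and> a \<in> carrier (grp A z) \<and> b \<in> carrier (grp B t) \<and> b' \<in> carrier (grp B t)}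
   \<union> {frag_of (v * u, w, act A v u a, b) - frag_of (v, u * w, a, act B w u b) | u v w a b.
        u * v * w = x \<and> a \<in> carrier (grp A v) \<and> b \<in> carrier (grp B w)}"

definition trels :: "('m::comm_monoid_mult, 'a) hmmod \<Rightarrow> ('m, 'b) hmmod \<Rightarrow> 'm \<Rightarrow> ('m \<times> 'm \<times> 'a \<times> 'b \<Rightarrow>\<^sub>0 int) set" where
  "trels A B x = generate (tfree A B x) (trelgens A B x)"

definition tcls :: "('m::comm_monoid_mult, 'a) hmmod \<Rightarrow> ('m, 'b) hmmod \<Rightarrow> 'm \<Rightarrow> ('m \<times> 'm \<times> 'a \<times> 'b \<Rightarrow>\<^sub>0 int) \<Rightarrow> ('m \<times> 'm \<times> 'a \<times> 'b \<Rightarrow>\<^sub>0 int) set" where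
  "tcls A B x p = trels A B x #>\<^bsub>tfree A B x\<^esub> p"

definition rep :: "'c set \<Rightarrow> 'c" where
  "rep c = (SOME p. p \<in> c)"

definition tensor :: "('m::comm_monoid_mult, 'a) hmmod \<Rightarrow> ('m, 'b) hmmod \<Rightarrow> ('m, ('m \<times> 'm \<times> 'a \<times> 'b \<Rightarrow>\<^sub>0 int) set) hmmod" where
  "tensor A B =
     \<lparr>grp = (\<lambda>x. tfree A B x Mod trels A B x),
      act = (\<lambda>x y c. tcls A B (x * y)
               (frag_extend (\<lambda>(z, t, a, b). frag_of (z * y, t, act A z y a, b)) (rep c)))\<rparr>"

definition tensor_hom :: "('m::comm_monoid_mult, 'a2) hmmod \<Rightarrow> ('m, 'b2) hmmod \<Rightarrow>
    ('m \<Rightarrow> 'a \<Rightarrow> 'a2) \<Rightarrow> ('m \<Rightarrow> 'b \<Rightarrow> 'b2) \<Rightarrow>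
    'm \<Rightarrow> ('m \<times> 'm \<times> 'a \<times> 'b \<Rightarrow>\<^sub>0 int) set \<Rightarrow> ('m \<times> 'm \<times> 'a2 \<times> 'b2 \<Rightarrow>\<^sub>0 int) set" where
  "tensor_hom A' B' f g x c =
     tcls A' B' x (frag_extend (\<lambda>(z, t, a, b). frag_of (z, t, f z a, g t b)) (rep c))"

definition tassoc :: "('m::comm_monoid_mult, 'a) hmmod \<Rightarrow> ('m, 'b) hmmod \<Rightarrow> ('m, 'c) hmmod \<Rightarrow> 'm \<Rightarrow>
    ('m \<times> 'm \<times> ('m \<times> 'm \<times> 'a \<times> 'b \<Rightarrow>\<^sub>0 int) set \<times> 'c \<Rightarrow>\<^sub>0 int) set \<Rightarrow>
    ('m \<times> 'm \<times> 'a \<times> ('m \<times> 'm \<times> 'b \<times> 'c \<Rightarrow>\<^sub>0 int) set \<Rightarrow>\<^sub>0 int) set" where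
  "tassoc A B C x c =
     tcls A (tensor B C) x
       (frag_extend (\<lambda>(z, t, d, w).
           frag_extend (\<lambda>(z1, t1, a, b). frag_of (z1, t1 * t, a, tcls B C (t1 * t) (frag_of (t1, t, b, w))))
             (rep d))
        (rep c))"

definition gext :: "'a monoid \<Rightarrow> ('k \<Rightarrow> 'a) \<Rightarrow> ('k \<Rightarrow>\<^sub>0 int) \<Rightarrow> 'a" where
  "gext G f p = finprod G (\<lambda>k. f k [^]\<^bsub>G\<^esub> (poly_mapping.lookup p k)) (Poly_Mapping.keys p)"

definition runit :: "('m::comm_monoid_mult, 'a) hmmod \<Rightarrow> 'm \<Rightarrow> ('m \<times> 'm \<times> 'a \<times> int \<Rightarrow>\<^sub>0 int) set \<Rightarrow> 'a" where
  "runit A x c = gext (grp A x) (\<lambda>(z, t, a, n). act A z t a [^]\<^bsub>grp A x\<^esub> n) (rep c)"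

definition lunit :: "('m::comm_monoid_mult, 'a) hmmod \<Rightarrow> 'm \<Rightarrow> ('m \<times> 'm \<times> int \<times> 'a \<Rightarrow>\<^sub>0 int) set \<Rightarrow> 'a" where
  "lunit A x c = gext (grp A x) (\<lambda>(z, t, n, a). act A t z a [^]\<^bsub>grp A x\<^esub> n) (rep c)"

definition tswap :: "('m::comm_monoid_mult, 'a) hmmod \<Rightarrow> ('m, 'b) hmmod \<Rightarrow> 'm \<Rightarrow>
    ('m \<times> 'm \<times> 'a \<times> 'b \<Rightarrow>\<^sub>0 int) set \<Rightarrow> ('m \<times> 'm \<times> 'b \<times> 'a \<Rightarrow>\<^sub>0 int) set" where
  "tswap A B x c = tcls B A x (frag_extend (\<lambda>(z, t, a, b). frag_of (t, z, b, a)) (rep c))"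

text \<open>Sets over M: a set S with a map \<pi> : S \<rightarrow> M. Morphisms of sets over M.\<close>

definition over_hom :: "'s set \<Rightarrow> ('s \<Rightarrow> 'm) \<Rightarrow> 't set \<Rightarrow> ('t \<Rightarrow> 'm) \<Rightarrow> ('s \<Rightarrow> 't) \<Rightarrow> bool" where
  "over_hom S \<pi> T \<rho> \<phi> \<longleftrightarrow> \<phi> \<in> S \<rightarrow> T \<and> (\<forall>s \<in> S. \<rho> (\<phi> s) = \<pi> s)"

definition prod_over :: "('s \<Rightarrow> 'm::comm_monoid_mult) \<Rightarrow> ('t \<Rightarrow> 'm) \<Rightarrow> ('s \<times> 't \<Rightarrow> 'm)" where
  "prod_over \<pi> \<rho> = (\<lambda>(s, t). \<pi> s * \<rho> t)"

definition zmod :: "'s set \<Rightarrow> ('s \<Rightarrow> 'm::comm_monoid_mult) \<Rightarrow> ('m, ('m \<times> 's \<Rightarrow>\<^sub>0 int)) hmmod" where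
  "zmod S \<pi> =
     \<lparr>grp = (\<lambda>x. free_Abelian_group {(u, s). s \<in> S \<and> u * \<pi> s = x}),
      act = (\<lambda>x y p. frag_extend (\<lambda>(u, s). frag_of (u * y, s)) p)\<rparr>"

definition zmap :: "('s \<Rightarrow> 't) \<Rightarrow> 'm \<Rightarrow> ('m \<times> 's \<Rightarrow>\<^sub>0 int) \<Rightarrow> ('m \<times> 't \<Rightarrow>\<^sub>0 int)" where
  "zmap \<phi> x p = frag_extend (\<lambda>(u, s). frag_of (u, \<phi> s)) p"

definition zPhi :: "'s set \<Rightarrow> ('s \<Rightarrow> 'm::comm_monoid_mult) \<Rightarrow> 't set \<Rightarrow> ('t \<Rightarrow> 'm) \<Rightarrow> 'm \<Rightarrow>
    ('m \<times> ('s \<times> 't) \<Rightarrow>\<^sub>0 int) \<Rightarrow> ('m \<times> 'm \<times> ('m \<times> 's \<Rightarrow>\<^sub>0 int) \<times> ('m \<times> 't \<Rightarrow>\<^sub>0 int) \<Rightarrow>\<^sub>0 int) set" where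
  "zPhi S \<pi> T \<rho> x p =
     tcls (zmod S \<pi>) (zmod T \<rho>) x
       (frag_extend (\<lambda>(u, (s, t)). frag_of (u * \<pi> s, \<rho> t, frag_of (u, s), frag_of (1, t))) p)"

definition zPsi :: "'m \<Rightarrow> ('m \<times> unit \<Rightarrow>\<^sub>0 int) \<Rightarrow> int" where
  "zPsi x p = (\<Sum>k \<in> Poly_Mapping.keys p. poly_mapping.lookup p k)"

definition unit_set :: "unit set" where "unit_set = {()}"
definition unit_over :: "unit \<Rightarrow> 'm::comm_monoid_mult" where "unit_over = (\<lambda>_. 1)"

end

theory Submission
  imports Defs
begin


definition zc :: "('a \<Rightarrow>\<^sub>0 int) set \<Rightarrow> bool" where
  "zc N \<longleftrightarrow> 0 \<in> N \<and> (\<forall>a\<in>N. \<forall>b\<in>N. a - b \<in> N)"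

lemma zc_0: "zc N \<Longrightarrow> 0 \<in> N" by (simp add: zc_def)
lemma zc_diff: "zc N \<Longrightarrow> a \<in> N \<Longrightarrow> b \<in> N \<Longrightarrow> a - b \<in> N" by (simp add: zc_def)
lemma zc_minus: "zc N \<Longrightarrow> a \<in> N \<Longrightarrow> - a \<in> N"
  using zc_diff[of N 0 a] by (simp add: zc_def)
lemma zc_add: "zc N \<Longrightarrow> a \<in> N \<Longrightarrow> b \<in> N \<Longrightarrow> a + b \<in> N"
  using zc_diff[of N a "-b"] zc_minus[of N b] by simp

lemma keys3: "a \<in> S \<Longrightarrow> b \<in> S \<Longrightarrow> c \<in> S \<Longrightarrow> Poly_Mapping.keys (frag_of a - frag_of b - frag_of c) \<subseteq> S"
  using keys_diff[of "frag_of a - frag_of b" "frag_of c"] keys_diff[of "frag_of a" "frag_of b"]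
  by (auto simp: keys_frag_of)
lemma keys2: "a \<in> S \<Longrightarrow> b \<in> S \<Longrightarrow> Poly_Mapping.keys (frag_of a - frag_of b) \<subseteq> S"
  using keys_diff[of "frag_of a" "frag_of b"] by (auto simp: keys_frag_of)

definition hmwf :: "('m::comm_monoid_mult, 'a) hmmod \<Rightarrow> bool" where
  "hmwf A \<longleftrightarrow> (\<forall>z a a'. a \<in> carrier (grp A z) \<longrightarrow> a' \<in> carrier (grp A z) \<longrightarrow> a \<otimes>\<^bsub>grp A z\<^esub> a' \<in> carrier (grp A z))
     \<and> (\<forall>z y a. a \<in> carrier (grp A z) \<longrightarrow> act A z y a \<in> carrier (grp A (z * y)))"

lemma hmwf_mult: "hmwf A \<Longrightarrow> a \<in> carrier (grp A z) \<Longrightarrow> a' \<in> carrier (grp A z) \<Longrightarrow> a \<otimes>\<^bsub>grp A z\<^esub> a' \<in> carrier (grp A z)"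
  by (simp add: hmwf_def)
lemma hmwf_act: "hmwf A \<Longrightarrow> a \<in> carrier (grp A z) \<Longrightarrow> act A z y a \<in> carrier (grp A (z * y))"
  by (simp add: hmwf_def)

lemma tgensI: "z * t = x \<Longrightarrow> a \<in> carrier (grp A z) \<Longrightarrow> b \<in> carrier (grp B t) \<Longrightarrow> (z, t, a, b) \<in> tgens A B x"
  by (simp add: tgens_def)

lemma tgensD: "(z, t, a, b) \<in> tgens A B x \<Longrightarrow> z * t = x \<and> a \<in> carrier (grp A z) \<and> b \<in> carrier (grp B t)"
  by (simp add: tgens_def)

lemma trelgens_keys:
  assumes wA: "hmwf A" and wB: "hmwf B" and g: "g \<in> trelgens A B x"
  shows "Poly_Mapping.keys g \<subseteq> tgens A B x"
  using g unfolding trelgens_def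
proof (elim UnE CollectE exE conjE)
  fix z t a a' b assume *: "g = frag_of (z, t, a \<otimes>\<^bsub>grp A z\<^esub> a', b) - frag_of (z, t, a, b) - frag_of (z, t, a', b)"
    "z * t = x" "a \<in> carrier (grp A z)" "a' \<in> carrier (grp A z)" "b \<in> carrier (grp B t)"
  show ?thesis unfolding *(1) by (intro keys3 tgensI *(2-5) hmwf_mult[OF wA])
next
  fix z t a b b' assume *: "g = frag_of (z, t, a, b \<otimes>\<^bsub>grp B t\<^esub> b') - frag_of (z, t, a, b) - frag_of (z, t, a, b')"
    "z * t = x" "a \<in> carrier (grp A z)" "b \<in> carrier (grp B t)" "b' \<in> carrier (grp B t)"
  show ?thesis unfolding *(1) by (intro keys3 tgensI *(2-5) hmwf_mult[OF wB])
next
  fix u v w a b assume *: "g = frag_of (v * u, w, act A v u a, b) - frag_of (v, u * w, a, act B w u b)"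
    "u * v * w = x" "a \<in> carrier (grp A v)" "b \<in> carrier (grp B w)"
  have 1: "v * u * w = x" "v * (u * w) = x" using *(2) by (simp_all add: ac_simps)
  have 2: "act A v u a \<in> carrier (grp A (v * u))" using wA *(3) by (rule hmwf_act)
  have 3: "act B w u b \<in> carrier (grp B (u * w))" using hmwf_act[OF wB *(4), of u] by (simp add: mult.commute)
  show ?thesis unfolding *(1) by (intro keys2 tgensI 1 2 3 *(3,4))
qed

lemma trelgens_carrier: assumes "hmwf A" "hmwf B" shows "trelgens A B x \<subseteq> carrier (tfree A B x)"
proof
  fix g assume "g \<in> trelgens A B x"
  then show "g \<in> carrier (tfree A B x)" unfolding tfree_def using trelgens_keys[OF assms] by simp
qed

lemma trels_subgroup: "hmwf A \<Longrightarrow> hmwf B \<Longrightarrow> subgroup (trels A B x) (tfree A B x)"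
  unfolding trels_def
  apply (rule group.generate_is_subgroup)
   apply (simp add: tfree_def)
  by (rule trelgens_carrier)

lemma trels_carrier: "hmwf A \<Longrightarrow> hmwf B \<Longrightarrow> r \<in> trels A B x \<Longrightarrow> Poly_Mapping.keys r \<subseteq> tgens A B x"
  using subgroup.mem_carrier[OF trels_subgroup[of A B]] by (force simp: tfree_def)

lemma zc_trels: assumes wA: "hmwf A" and wB: "hmwf B" shows "zc (trels A B x)"
proof -
  note sg = trels_subgroup[OF wA wB, of x]
  have "0 \<in> trels A B x" using subgroup.one_closed[OF sg] by (simp add: tfree_def)
  moreover have "a - b \<in> trels A B x" if "a \<in> trels A B x" "b \<in> trels A B x" for a b
  proof -
    have "inv\<^bsub>tfree A B x\<^esub> b \<in> trels A B x" using subgroup.m_inv_closed[OF sg that(2)] .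
    then have "- b \<in> trels A B x" using trels_carrier[OF wA wB that(2)] by (simp add: tfree_def)
    then have "a \<otimes>\<^bsub>tfree A B x\<^esub> (- b) \<in> trels A B x" using subgroup.m_closed[OF sg that(1)] by blast
    then show ?thesis by (simp add: tfree_def)
  qed
  ultimately show ?thesis by (simp add: zc_def)
qed

lemma trelgens_trels: "g \<in> trelgens A B x \<Longrightarrow> g \<in> trels A B x"
  by (simp add: trels_def generate.incl)

lemma trels_map:
  assumes wA: "hmwf A" and wB: "hmwf B" and N: "zc N" and gens: "\<And>g. g \<in> trelgens A B x \<Longrightarrow> frag_extend h g \<in> N"
    and r: "r \<in> trels A B x"
  shows "frag_extend h r \<in> N"
proof -
  have "r \<in> generate (tfree A B x) (trelgens A B x)" using r by (simp add: trels_def)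
  then show ?thesis
  proof (induction r rule: generate.induct)
    case one then show ?case using N by (simp add: tfree_def zc_0)
  next
    case (incl g) then show ?case by (rule gens)
  next
    case (inv g)
    then have "inv\<^bsub>tfree A B x\<^esub> g = - g" using trelgens_carrier[OF wA wB, of x] by (auto simp: tfree_def)
    then show ?case using inv gens N by (simp add: frag_extend_minus zc_minus)
  next
    case (eng a b) then show ?case using N by (simp add: tfree_def frag_extend_add zc_add)
  qed
qed

context fixes A :: "('m::comm_monoid_mult, 'a) hmmod" and B :: "('m, 'b) hmmod" assumes wA: "hmwf A" and wB: "hmwf B"
begin

lemma tcls_eq: "tcls A B x q = (\<lambda>r. r + q) ` trels A B x"
  by (auto simp: tcls_def r_coset_def tfree_def)

lemma rep_tcls: "rep (tcls A B x q) - q \<in> trels A B x"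
proof -
  have "q \<in> tcls A B x q" using zc_0[OF zc_trels[OF wA wB]] by (force simp: tcls_eq)
  then have "rep (tcls A B x q) \<in> tcls A B x q" unfolding rep_def by (rule someI)
  then show ?thesis by (auto simp: tcls_eq)
qed

lemma tcls_eqI: "q - q' \<in> trels A B x \<Longrightarrow> tcls A B x q = tcls A B x q'"
proof -
  assume d: "q - q' \<in> trels A B x"
  note Z = zc_trels[OF wA wB, of x]
  show ?thesis unfolding tcls_eq
  proof (intro equalityI subsetI)
    fix y assume "y \<in> (\<lambda>r. r + q) ` trels A B x"
    then obtain r where "r \<in> trels A B x" "y = r + q" by auto
    then show "y \<in> (\<lambda>r. r + q') ` trels A B x"
      by (intro image_eqI[of _ _ "r + (q - q')"]) (auto intro: zc_add[OF Z] d)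
  next
    fix y assume "y \<in> (\<lambda>r. r + q') ` trels A B x"
    then obtain r where "r \<in> trels A B x" "y = r + q'" by auto
    then show "y \<in> (\<lambda>r. r + q) ` trels A B x"
      by (intro image_eqI[of _ _ "r - (q - q')"]) (auto intro: zc_diff[OF Z] d)
  qed
qed

lemma tcls_eqD: "tcls A B x q = tcls A B x q' \<Longrightarrow> q - q' \<in> trels A B x"
proof -
  assume e: "tcls A B x q = tcls A B x q'"
  have "q \<in> tcls A B x q" using zc_0[OF zc_trels[OF wA wB]] by (force simp: tcls_eq)
  then obtain r where "r \<in> trels A B x" "q = r + q'" using e by (auto simp: tcls_eq)
  then show ?thesis by simp
qed

lemma carrier_tensor: "carrier (grp (tensor A B) x) = tcls A B x ` carrier (tfree A B x)"
  by (simp add: tensor_def carrier_FactGroup tcls_def image_def)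

lemma mult_tensor: "tcls A B x p \<otimes>\<^bsub>grp (tensor A B) x\<^esub> tcls A B x q = tcls A B x (p + q)"
proof -
  note Z = zc_trels[OF wA wB, of x]
  have "(\<Union>a\<in>trels A B x. \<Union>b\<in>trels A B x. {a + p + (b + q)}) = (\<lambda>r. r + (p + q)) ` trels A B x"
  proof (intro equalityI subsetI)
    fix y assume "y \<in> (\<Union>a\<in>trels A B x. \<Union>b\<in>trels A B x. {a + p + (b + q)})"
    then obtain a b where "a \<in> trels A B x" "b \<in> trels A B x" "y = a + p + (b + q)" by auto
    then show "y \<in> (\<lambda>r. r + (p + q)) ` trels A B x"
      by (intro image_eqI[of _ _ "a + b"]) (auto intro: zc_add[OF Z])
  next
    fix y assume "y \<in> (\<lambda>r. r + (p + q)) ` trels A B x"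
    then obtain a where "a \<in> trels A B x" "y = a + (p + q)" by auto
    then show "y \<in> (\<Union>a\<in>trels A B x. \<Union>b\<in>trels A B x. {a + p + (b + q)})"
      using zc_0[OF Z] by (intro UN_I[of a] UN_I[of 0]) auto
  qed
  then show ?thesis
    unfolding tensor_def FactGroup_def set_mult_def by (simp add: tcls_eq tfree_def)
qed

end

lemma tcls_rep_map:
  assumes "hmwf A" "hmwf B" "hmwf A'" "hmwf B'" and "\<And>r. r \<in> trels A B x \<Longrightarrow> frag_extend h r \<in> trels A' B' x'"
  shows "tcls A' B' x' (frag_extend h (rep (tcls A B x q))) = tcls A' B' x' (frag_extend h q)"
  apply (rule tcls_eqI[OF assms(3,4)])
  using assms(5)[OF rep_tcls[OF assms(1,2), of x q]] by (simp add: frag_extend_diff)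

lemma frag_extend_frag_extend: "frag_extend f (frag_extend g c) = frag_extend (\<lambda>k. frag_extend f (g k)) c"
  using subset_UNIV
  by (induction c rule: frag_induction) (auto simp: frag_extend_diff)

lemma lin_eq:
  assumes "Poly_Mapping.keys c \<subseteq> S" "\<And>k. k \<in> S \<Longrightarrow> f k = g k"
  shows "frag_extend f c = frag_extend g c"
  using assms(1) by (induction c rule: frag_induction) (auto simp: frag_extend_diff assms(2))

lemma lin_N:
  assumes "zc N" "Poly_Mapping.keys c \<subseteq> S" "\<And>k. k \<in> S \<Longrightarrow> F (frag_of k) \<in> N"
    and "F 0 = 0" "\<And>a b. F (a - b) = F a - F b"
  shows "F c \<in> N"
  using assms(2) by (induction c rule: frag_induction) (auto simp: assms zc_0 zc_diff)


lemma trelgen1: "z * t = x \<Longrightarrow> a \<in> carrier (grp A z) \<Longrightarrow> a' \<in> carrier (grp A z) \<Longrightarrow> b \<in> carrier (grp B t) \<Longrightarrow>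
  frag_of (z, t, a \<otimes>\<^bsub>grp A z\<^esub> a', b) - frag_of (z, t, a, b) - frag_of (z, t, a', b) \<in> trels A B x"
  by (rule trelgens_trels) (unfold trelgens_def, blast)
lemma trelgen2: "z * t = x \<Longrightarrow> a \<in> carrier (grp A z) \<Longrightarrow> b \<in> carrier (grp B t) \<Longrightarrow> b' \<in> carrier (grp B t) \<Longrightarrow>
  frag_of (z, t, a, b \<otimes>\<^bsub>grp B t\<^esub> b') - frag_of (z, t, a, b) - frag_of (z, t, a, b') \<in> trels A B x"
  by (rule trelgens_trels) (unfold trelgens_def, blast)
lemma trelgen3: "u * v * w = x \<Longrightarrow> a \<in> carrier (grp A v) \<Longrightarrow> b \<in> carrier (grp B w) \<Longrightarrow>
  frag_of (v * u, w, act A v u a, b) - frag_of (v, u * w, a, act B w u b) \<in> trels A B x"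
  by (rule trelgens_trels) (unfold trelgens_def, blast)

definition hmok :: "('m::comm_monoid_mult, 'a) hmmod \<Rightarrow> bool" where
  "hmok A \<longleftrightarrow> hmwf A \<and>
     (\<forall>z y a a'. a \<in> carrier (grp A z) \<longrightarrow> a' \<in> carrier (grp A z) \<longrightarrow>
        act A z y (a \<otimes>\<^bsub>grp A z\<^esub> a') = act A z y a \<otimes>\<^bsub>grp A (z * y)\<^esub> act A z y a') \<and>
     (\<forall>x y z a. a \<in> carrier (grp A x) \<longrightarrow> act A (x * y) z (act A x y a) = act A x (y * z) a)"

lemma hmok_wf: "hmok A \<Longrightarrow> hmwf A" by (simp add: hmok_def)
lemma hmok_mult: "hmok A \<Longrightarrow> a \<in> carrier (grp A z) \<Longrightarrow> a' \<in> carrier (grp A z) \<Longrightarrow>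
        act A z y (a \<otimes>\<^bsub>grp A z\<^esub> a') = act A z y a \<otimes>\<^bsub>grp A (z * y)\<^esub> act A z y a'"
  by (simp add: hmok_def)
lemma hmok_comp: "hmok A \<Longrightarrow> a \<in> carrier (grp A x) \<Longrightarrow> act A (x * y) z (act A x y a) = act A x (y * z) a"
  by (simp add: hmok_def)

lemma keys_add_sub: "Poly_Mapping.keys p \<subseteq> S \<Longrightarrow> Poly_Mapping.keys q \<subseteq> S \<Longrightarrow> Poly_Mapping.keys (p + q) \<subseteq> S"
  by (metis Un_subset_iff keys_add order_trans)
lemma keys_diff_sub: "Poly_Mapping.keys p \<subseteq> S \<Longrightarrow> Poly_Mapping.keys q \<subseteq> S \<Longrightarrow> Poly_Mapping.keys (p - q) \<subseteq> S"
  by (metis Un_subset_iff keys_diff order_trans)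
lemma keys_minus_sub: "Poly_Mapping.keys p \<subseteq> S \<Longrightarrow> Poly_Mapping.keys (- p) \<subseteq> S"
  by simp

lemma keys_frag_extend_sub: "(\<And>k. k \<in> Poly_Mapping.keys c \<Longrightarrow> Poly_Mapping.keys (f k) \<subseteq> S) \<Longrightarrow> Poly_Mapping.keys (frag_extend f c) \<subseteq> S"
  using keys_frag_extend[of f c] by blast

lemma grp_zmod: "grp (zmod S \<pi>) x = free_Abelian_group {(u, s). s \<in> S \<and> u * \<pi> s = x}"
  by (simp add: zmod_def)
lemma act_zmod: "act (zmod S \<pi>) x y p = frag_extend (\<lambda>(u, s). frag_of (u * y, s)) p"
  by (simp add: zmod_def)
lemma carrier_zmod: "p \<in> carrier (grp (zmod S \<pi>) x) \<longleftrightarrow> Poly_Mapping.keys p \<subseteq> {(u, s). s \<in> S \<and> u * \<pi> s = x}"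
  by (simp add: zmod_def)
lemma mult_zmod: "p \<otimes>\<^bsub>grp (zmod S \<pi>) x\<^esub> q = p + q"
  by (simp add: zmod_def)

lemma act_zmod_of: "act (zmod S \<pi>) x y (frag_of (u, s)) = frag_of (u * y, s)"
  by (simp add: act_zmod)

lemma hmok_zmod: "hmok (zmod S \<pi>)"
  unfolding hmok_def hmwf_def
proof (intro conjI allI impI)
  fix z a a' assume "a \<in> carrier (grp (zmod S \<pi>) z)" "a' \<in> carrier (grp (zmod S \<pi>) z)"
  then show "a \<otimes>\<^bsub>grp (zmod S \<pi>) z\<^esub> a' \<in> carrier (grp (zmod S \<pi>) z)"
    by (simp add: grp_zmod) (meson Un_subset_iff keys_add order_trans)
next
  fix z y a assume "a \<in> carrier (grp (zmod S \<pi>) z)"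
  then show "act (zmod S \<pi>) z y a \<in> carrier (grp (zmod S \<pi>) (z * y))"
    unfolding carrier_zmod act_zmod
    by (intro keys_frag_extend_sub) (auto simp: keys_frag_of ac_simps)
next
  fix z y a a'
  show "act (zmod S \<pi>) z y (a \<otimes>\<^bsub>grp (zmod S \<pi>) z\<^esub> a') =
       act (zmod S \<pi>) z y a \<otimes>\<^bsub>grp (zmod S \<pi>) (z * y)\<^esub> act (zmod S \<pi>) z y a'"
    by (simp add: mult_zmod act_zmod frag_extend_add)
next
  fix x y z a
  show "act (zmod S \<pi>) (x * y) z (act (zmod S \<pi>) x y a) = act (zmod S \<pi>) x (y * z) a"
    by (simp add: act_zmod frag_extend_frag_extend case_prod_unfold mult.assoc)
qed

lemma hmwf_zmod: "hmwf (zmod S \<pi>)" using hmok_zmod hmok_wf by blast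

lemma hmok_zunit: "hmok zunit"
  by (simp add: hmok_def hmwf_def zunit_def)

definition tsh :: "('m::comm_monoid_mult, 'a) hmmod \<Rightarrow> 'm \<Rightarrow> 'm \<times> 'm \<times> 'a \<times> 'b \<Rightarrow> ('m \<times> 'm \<times> 'a \<times> 'b \<Rightarrow>\<^sub>0 int)" where
  "tsh A y = (\<lambda>(z, t, a, b). frag_of (z * y, t, act A z y a, b))"

lemma act_tensor: "act (tensor A B) x y c = tcls A B (x * y) (frag_extend (tsh A y) (rep c))"
  by (simp add: tensor_def tsh_def)

lemma grp_tensor: "grp (tensor A B) x = tfree A B x Mod trels A B x"
  by (simp add: tensor_def)

lemma carrier_tfree: "q \<in> carrier (tfree A B x) \<longleftrightarrow> Poly_Mapping.keys q \<subseteq> tgens A B x"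
  by (simp add: tfree_def)

lemma tensor_rep:
  assumes "hmwf A" "hmwf B" "c \<in> carrier (grp (tensor A B) x)"
  shows "rep c \<in> carrier (tfree A B x) \<and> c = tcls A B x (rep c)"
proof -
  obtain q where q: "q \<in> carrier (tfree A B x)" "c = tcls A B x q"
    using assms(3) by (auto simp: carrier_tensor[OF assms(1,2)])
  have "rep c - q \<in> trels A B x" using rep_tcls[OF assms(1,2)] q(2) by blast
  then have "Poly_Mapping.keys (rep c - q) \<subseteq> tgens A B x" by (rule trels_carrier[OF assms(1,2)])
  then have "Poly_Mapping.keys ((rep c - q) + q) \<subseteq> tgens A B x"
    using q(1) unfolding carrier_tfree by (rule keys_add_sub)
  then have "rep c \<in> carrier (tfree A B x)" by (simp add: carrier_tfree)
  moreover have "c = tcls A B x (rep c)"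
    using tcls_eqI[OF assms(1,2), of "rep c" q] \<open>rep c - q \<in> trels A B x\<close> q(2) by simp
  ultimately show ?thesis by blast
qed

lemma mul_sh: "z * t = (x::'m::comm_monoid_mult) \<Longrightarrow> z * y * t = x * y"
proof -
  assume "z * t = x"
  then have "x * y = z * t * y" by simp
  then show ?thesis by (simp add: ac_simps)
qed

lemma tsh_gens:
  assumes "hmwf A" "Poly_Mapping.keys q \<subseteq> tgens A B x"
  shows "Poly_Mapping.keys (frag_extend (tsh A y) q) \<subseteq> tgens A B (x * y)"
proof (intro keys_frag_extend_sub)
  fix k assume "k \<in> Poly_Mapping.keys q"
  then have "k \<in> tgens A B x" using assms(2) by blast
  then obtain z t a b where "k = (z, t, a, b)" "z * t = x" "a \<in> carrier (grp A z)" "b \<in> carrier (grp B t)"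
    by (cases k) (auto simp: tgens_def)
  then show "Poly_Mapping.keys (tsh A y k) \<subseteq> tgens A B (x * y)"
    by (simp add: tsh_def keys_frag_of) (intro tgensI mul_sh hmwf_act[OF assms(1)])
qed

lemma tsh_rels:
  assumes oA: "hmok A" and wB: "hmwf B" and r: "r \<in> trels A B x"
  shows "frag_extend (tsh A y) r \<in> trels A B (x * y)"
proof (rule trels_map[OF hmok_wf[OF oA] wB zc_trels[OF hmok_wf[OF oA] wB] _ r])
  note wA = hmok_wf[OF oA]
  fix g assume "g \<in> trelgens A B x"
  then show "frag_extend (tsh A y) g \<in> trels A B (x * y)"
    unfolding trelgens_def
  proof (elim UnE CollectE exE conjE)
    fix z t a a' b assume *: "g = frag_of (z, t, a \<otimes>\<^bsub>grp A z\<^esub> a', b) - frag_of (z, t, a, b) - frag_of (z, t, a', b)"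
      "z * t = x" "a \<in> carrier (grp A z)" "a' \<in> carrier (grp A z)" "b \<in> carrier (grp B t)"
    have "z * y * t = x * y" using *(2) by (rule mul_sh)
    from trelgen1[OF this hmwf_act[OF wA *(3), of y] hmwf_act[OF wA *(4), of y] *(5)]
    show ?thesis unfolding *(1) by (simp add: frag_extend_diff tsh_def hmok_mult[OF oA *(3,4)])
  next
    fix z t a b b' assume *: "g = frag_of (z, t, a, b \<otimes>\<^bsub>grp B t\<^esub> b') - frag_of (z, t, a, b) - frag_of (z, t, a, b')"
      "z * t = x" "a \<in> carrier (grp A z)" "b \<in> carrier (grp B t)" "b' \<in> carrier (grp B t)"
    have "z * y * t = x * y" using *(2) by (rule mul_sh)
    from trelgen2[OF this hmwf_act[OF wA *(3), of y] *(4,5)]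
    show ?thesis unfolding *(1) by (simp add: frag_extend_diff tsh_def)
  next
    fix u v w a b assume *: "g = frag_of (v * u, w, act A v u a, b) - frag_of (v, u * w, a, act B w u b)"
      "u * v * w = x" "a \<in> carrier (grp A v)" "b \<in> carrier (grp B w)"
    have "x * y = u * v * w * y" using *(2) by simp
    then have 1: "u * (v * y) * w = x * y" by (simp add: ac_simps)
    have 2: "act A (v * u) y (act A v u a) = act A (v * y) u (act A v y a)"
      using hmok_comp[OF oA *(3), of u y] hmok_comp[OF oA *(3), of y u] by (simp add: ac_simps)
    have 3: "v * u * y = v * y * u" by (simp add: ac_simps)
    have "frag_extend (tsh A y) g = frag_of (v * y * u, w, act A (v * y) u (act A v y a), b) -
     frag_of (v * y, u * w, act A v y a, act B w u b)"
      unfolding *(1) by (simp add: frag_extend_diff tsh_def 2 3)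
    then show ?thesis using trelgen3[OF 1 hmwf_act[OF wA *(3), of y] *(4)] by simp
  qed
qed

lemma hmwf_tensor:
  assumes oA: "hmok A" and wB: "hmwf B"
  shows "hmwf (tensor A B)"
  unfolding hmwf_def
proof (intro conjI allI impI)
  note wA = hmok_wf[OF oA]
  fix z a a' assume a: "a \<in> carrier (grp (tensor A B) z)" "a' \<in> carrier (grp (tensor A B) z)"
  then obtain q q' where qq: "q \<in> carrier (tfree A B z)" "q' \<in> carrier (tfree A B z)" "a = tcls A B z q" "a' = tcls A B z q'"
    by (auto simp: carrier_tensor[OF wA wB])
  then have "q + q' \<in> carrier (tfree A B z)" by (simp add: carrier_tfree keys_add_sub)
  with qq show "a \<otimes>\<^bsub>grp (tensor A B) z\<^esub> a' \<in> carrier (grp (tensor A B) z)"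
    by (simp add: mult_tensor[OF wA wB] carrier_tensor[OF wA wB])
next
  note wA = hmok_wf[OF oA]
  fix z y a assume "a \<in> carrier (grp (tensor A B) z)"
  then have "rep a \<in> carrier (tfree A B z)" using tensor_rep[OF wA wB] by blast
  then have "frag_extend (tsh A y) (rep a) \<in> carrier (tfree A B (z * y))"
    using tsh_gens[OF wA] by (simp add: carrier_tfree)
  then show "act (tensor A B) z y a \<in> carrier (grp (tensor A B) (z * y))"
    unfolding act_tensor carrier_tensor[OF wA wB] by (rule imageI)
qed


lemma frag_extend_fun_add: "frag_extend (\<lambda>k. f k + g k) c = frag_extend f c + frag_extend g c"
  using subset_UNIV by (induction c rule: frag_induction) (auto simp: frag_extend_diff)
lemma frag_extend_fun_diff: "frag_extend (\<lambda>k. f k - g k) c = frag_extend f c - frag_extend g c"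
  using subset_UNIV by (induction c rule: frag_induction) (auto simp: frag_extend_diff)
lemma frag_extend_fun_0: "frag_extend (\<lambda>k. 0) c = 0"
  by (simp add: frag_extend_eq_0)

definition pmul :: "('m::comm_monoid_mult \<times> 's \<Rightarrow>\<^sub>0 int) \<Rightarrow> ('m \<times> 't \<Rightarrow>\<^sub>0 int) \<Rightarrow> ('m \<times> ('s \<times> 't) \<Rightarrow>\<^sub>0 int)" where
  "pmul a b = frag_extend (\<lambda>(u, s). frag_extend (\<lambda>(v, t). frag_of (u * v, (s, t))) b) a"

lemma pmul_0_1 [simp]: "pmul 0 b = 0" by (simp add: pmul_def)
lemma pmul_0_2 [simp]: "pmul a 0 = 0" by (simp add: pmul_def case_prod_unfold frag_extend_fun_0)
lemma pmul_add1: "pmul (a + a') b = pmul a b + pmul a' b" by (simp add: pmul_def frag_extend_add)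
lemma pmul_diff1: "pmul (a - a') b = pmul a b - pmul a' b" by (simp add: pmul_def frag_extend_diff)
lemma pmul_add2: "pmul a (b + b') = pmul a b + pmul a b'"
  by (simp add: pmul_def frag_extend_add case_prod_unfold frag_extend_fun_add)
lemma pmul_diff2: "pmul a (b - b') = pmul a b - pmul a b'"
  by (simp add: pmul_def frag_extend_diff case_prod_unfold frag_extend_fun_diff)
lemma pmul_of: "pmul (frag_of (u, s)) (frag_of (v, t)) = frag_of (u * v, (s, t))"
  by (simp add: pmul_def)
lemma pmul_of1: "pmul (frag_of (u, s)) b = frag_extend (\<lambda>(v, t). frag_of (u * v, (s, t))) b"
  by (simp add: pmul_def)

lemma pmul_act: "pmul (act (zmod S \<pi>) v u a) b = pmul a (act (zmod T \<rho>) w u b)"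
  by (simp add: pmul_def act_zmod frag_extend_frag_extend case_prod_unfold ac_simps)

definition phig :: "('s \<Rightarrow> 'm::comm_monoid_mult) \<Rightarrow> ('t \<Rightarrow> 'm) \<Rightarrow> 'm \<times> ('s \<times> 't) \<Rightarrow> ('m \<times> 'm \<times> ('m \<times> 's \<Rightarrow>\<^sub>0 int) \<times> ('m \<times> 't \<Rightarrow>\<^sub>0 int) \<Rightarrow>\<^sub>0 int)" where
  "phig \<pi> \<rho> = (\<lambda>(u, (s, t)). frag_of (u * \<pi> s, \<rho> t, frag_of (u, s), frag_of (1, t)))"

definition psig :: "'m \<times> 'm \<times> ('m::comm_monoid_mult \<times> 's \<Rightarrow>\<^sub>0 int) \<times> ('m \<times> 't \<Rightarrow>\<^sub>0 int) \<Rightarrow> ('m \<times> ('s \<times> 't) \<Rightarrow>\<^sub>0 int)" where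
  "psig = (\<lambda>(z, t, a, b). pmul a b)"

lemma zPhi_eq: "zPhi S \<pi> T \<rho> x p = tcls (zmod S \<pi>) (zmod T \<rho>) x (frag_extend (phig \<pi> \<rho>) p)"
  by (simp add: zPhi_def phig_def)

lemma zc_zero: "zc {0}" by (simp add: zc_def)

lemma psig_rels:
  assumes r: "r \<in> trels (zmod S \<pi>) (zmod T \<rho>) x"
  shows "frag_extend psig r = 0"
proof -
  have "frag_extend psig r \<in> {0}"
  proof (rule trels_map[OF hmwf_zmod hmwf_zmod zc_zero _ r])
    fix g assume "g \<in> trelgens (zmod S \<pi>) (zmod T \<rho>) x"
    then show "frag_extend psig g \<in> {0}"
      unfolding trelgens_def
      by (elim UnE CollectE exE conjE) (simp_all add: frag_extend_diff psig_def mult_zmod pmul_add1 pmul_add2 pmul_act)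
  qed
  then show ?thesis by simp
qed

lemma psig_phig: "frag_extend psig (frag_extend (phig \<pi> \<rho>) p) = p"
proof -
  have "frag_extend psig (frag_extend (phig \<pi> \<rho>) p) = frag_extend frag_of p"
    unfolding frag_extend_frag_extend
    by (rule lin_eq[OF subset_UNIV]) (auto simp: phig_def psig_def pmul_of)
  then show ?thesis using frag_expansion[of p] by simp
qed

abbreviation "bas S \<pi> x \<equiv> {(u, s). s \<in> S \<and> u * \<pi> s = x}"

lemma phig_keys:
  assumes "Poly_Mapping.keys p \<subseteq> bas (S \<times> T) (prod_over \<pi> \<rho>) x"
  shows "Poly_Mapping.keys (frag_extend (phig \<pi> \<rho>) p) \<subseteq> tgens (zmod S \<pi>) (zmod T \<rho>) x"
  using assms
  by (intro keys_frag_extend_sub) (auto simp: phig_def prod_over_def keys_frag_of tgens_def carrier_zmod ac_simps)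

lemma pmul_keys:
  assumes "Poly_Mapping.keys a \<subseteq> bas S \<pi> z" "Poly_Mapping.keys b \<subseteq> bas T \<rho> t"
  shows "Poly_Mapping.keys (pmul a b) \<subseteq> bas (S \<times> T) (prod_over \<pi> \<rho>) (z * t)"
  unfolding pmul_def
proof (intro keys_frag_extend_sub)
  fix k assume "k \<in> Poly_Mapping.keys a"
  then obtain u s where k: "k = (u, s)" "s \<in> S" "u * \<pi> s = z" using assms(1) by blast
  show "Poly_Mapping.keys ((\<lambda>(u, s). frag_extend (\<lambda>(v, t). frag_of (u * v, s, t)) b) k) \<subseteq> bas (S \<times> T) (prod_over \<pi> \<rho>) (z * t)"
    unfolding k(1) case_prod_conv
  proof (intro keys_frag_extend_sub)
    fix j assume "j \<in> Poly_Mapping.keys b"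
    then obtain v t' where j: "j = (v, t')" "t' \<in> T" "v * \<rho> t' = t" using assms(2) by blast
    have "u * v * prod_over \<pi> \<rho> (s, t') = z * t"
      using k j by (auto simp: prod_over_def ac_simps)
    then show "Poly_Mapping.keys ((\<lambda>(v, t). frag_of (u * v, s, t)) j) \<subseteq> bas (S \<times> T) (prod_over \<pi> \<rho>) (z * t)"
      using k j by (simp add: keys_frag_of)
  qed
qed

lemma psig_keys:
  assumes "Poly_Mapping.keys q \<subseteq> tgens (zmod S \<pi>) (zmod T \<rho>) x"
  shows "Poly_Mapping.keys (frag_extend psig q) \<subseteq> bas (S \<times> T) (prod_over \<pi> \<rho>) x"
proof (intro keys_frag_extend_sub)
  fix k assume "k \<in> Poly_Mapping.keys q"
  then have "k \<in> tgens (zmod S \<pi>) (zmod T \<rho>) x" using assms by blast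
  then obtain z t a b where "k = (z, t, a, b)" "z * t = x" "a \<in> carrier (grp (zmod S \<pi>) z)" "b \<in> carrier (grp (zmod T \<rho>) t)"
    by (cases k) (auto simp: tgens_def)
  then show "Poly_Mapping.keys (psig k) \<subseteq> bas (S \<times> T) (prod_over \<pi> \<rho>) x"
    using pmul_keys[of a S \<pi> z b T \<rho> t] by (simp add: psig_def carrier_zmod)
qed


lemma bil_A:
  assumes wA: "hmwf A" and wB: "hmwf B" and G: "grp A z = free_Abelian_group X"
    and b: "b \<in> carrier (grp B t)" and zt: "z * t = x"
    and L0: "L 0 = 0" and Ld: "\<And>a a'. L (a - a') = L a - L a'"
    and base: "\<And>k. k \<in> X \<Longrightarrow> frag_of (z, t, frag_of k, b) - L (frag_of k) \<in> trels A B x"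
    and a: "Poly_Mapping.keys a \<subseteq> X"
  shows "frag_of (z, t, a, b) - L a \<in> trels A B x"
proof (rule free_Abelian_group_induct[OF a, where P = "\<lambda>a. frag_of (z, t, a, b) - L a \<in> trels A B x"])
  have "frag_of (z, t, 0 \<otimes>\<^bsub>grp A z\<^esub> 0, b) - frag_of (z, t, 0, b) - frag_of (z, t, 0, b) \<in> trels A B x"
    by (rule trelgen1[OF zt _ _ b]) (simp_all add: G)
  then have "- frag_of (z, t, 0, b) \<in> trels A B x" by (simp add: G)
  then show "frag_of (z, t, 0, b) - L 0 \<in> trels A B x" using zc_minus[OF zc_trels[OF wA wB]] L0 by fastforce
next
  fix a1 a2 assume 2: "Poly_Mapping.keys a1 \<subseteq> X" "Poly_Mapping.keys a2 \<subseteq> X"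
    "frag_of (z, t, a1, b) - L a1 \<in> trels A B x" "frag_of (z, t, a2, b) - L a2 \<in> trels A B x"
  have "frag_of (z, t, (a1 - a2) \<otimes>\<^bsub>grp A z\<^esub> a2, b) - frag_of (z, t, a1 - a2, b) - frag_of (z, t, a2, b) \<in> trels A B x"
    by (rule trelgen1[OF zt _ _ b]) (use 2 in \<open>simp_all add: G keys_diff_sub\<close>)
  then have R: "frag_of (z, t, a1, b) - frag_of (z, t, a1 - a2, b) - frag_of (z, t, a2, b) \<in> trels A B x"
    by (simp add: G)
  have E: "frag_of (z, t, a1 - a2, b) - L (a1 - a2) =
        (frag_of (z, t, a1, b) - L a1) - (frag_of (z, t, a2, b) - L a2) - (frag_of (z, t, a1, b) - frag_of (z, t, a1 - a2, b) - frag_of (z, t, a2, b))"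
    by (simp add: Ld)
  show "frag_of (z, t, a1 - a2, b) - L (a1 - a2) \<in> trels A B x" unfolding E by (rule zc_diff[OF zc_trels[OF wA wB] zc_diff[OF zc_trels[OF wA wB] 2(3) 2(4)] R])
next
  fix k assume "k \<in> X" then show "frag_of (z, t, frag_of k, b) - L (frag_of k) \<in> trels A B x" by (rule base)
qed

lemma bil_B:
  assumes wA: "hmwf A" and wB: "hmwf B" and G: "grp B t = free_Abelian_group X"
    and a: "a \<in> carrier (grp A z)" and zt: "z * t = x"
    and L0: "L 0 = 0" and Ld: "\<And>b b'. L (b - b') = L b - L b'"
    and base: "\<And>k. k \<in> X \<Longrightarrow> frag_of (z, t, a, frag_of k) - L (frag_of k) \<in> trels A B x"
    and b: "Poly_Mapping.keys b \<subseteq> X"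
  shows "frag_of (z, t, a, b) - L b \<in> trels A B x"
proof (rule free_Abelian_group_induct[OF b, where P = "\<lambda>b. frag_of (z, t, a, b) - L b \<in> trels A B x"])
  have "frag_of (z, t, a, 0 \<otimes>\<^bsub>grp B t\<^esub> 0) - frag_of (z, t, a, 0) - frag_of (z, t, a, 0) \<in> trels A B x"
    by (rule trelgen2[OF zt a]) (simp_all add: G)
  then have "- frag_of (z, t, a, 0) \<in> trels A B x" by (simp add: G)
  then show "frag_of (z, t, a, 0) - L 0 \<in> trels A B x" using zc_minus[OF zc_trels[OF wA wB]] L0 by fastforce
next
  fix b1 b2 assume 2: "Poly_Mapping.keys b1 \<subseteq> X" "Poly_Mapping.keys b2 \<subseteq> X"
    "frag_of (z, t, a, b1) - L b1 \<in> trels A B x" "frag_of (z, t, a, b2) - L b2 \<in> trels A B x"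
  have "frag_of (z, t, a, (b1 - b2) \<otimes>\<^bsub>grp B t\<^esub> b2) - frag_of (z, t, a, b1 - b2) - frag_of (z, t, a, b2) \<in> trels A B x"
    by (rule trelgen2[OF zt a]) (use 2 in \<open>simp_all add: G keys_diff_sub\<close>)
  then have R: "frag_of (z, t, a, b1) - frag_of (z, t, a, b1 - b2) - frag_of (z, t, a, b2) \<in> trels A B x"
    by (simp add: G)
  have E: "frag_of (z, t, a, b1 - b2) - L (b1 - b2) =
        (frag_of (z, t, a, b1) - L b1) - (frag_of (z, t, a, b2) - L b2) - (frag_of (z, t, a, b1) - frag_of (z, t, a, b1 - b2) - frag_of (z, t, a, b2))"
    by (simp add: Ld)
  show "frag_of (z, t, a, b1 - b2) - L (b1 - b2) \<in> trels A B x" unfolding E by (rule zc_diff[OF zc_trels[OF wA wB] zc_diff[OF zc_trels[OF wA wB] 2(3) 2(4)] R])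
next
  fix k assume "k \<in> X" then show "frag_of (z, t, a, frag_of k) - L (frag_of k) \<in> trels A B x" by (rule base)
qed

lemma phig_psig:
  assumes q: "Poly_Mapping.keys q \<subseteq> tgens (zmod S \<pi>) (zmod T \<rho>) x"
  shows "q - frag_extend (phig \<pi> \<rho>) (frag_extend psig q) \<in> trels (zmod S \<pi>) (zmod T \<rho>) x"
proof (rule lin_N[OF zc_trels[OF hmwf_zmod hmwf_zmod] q, where F = "\<lambda>q. q - frag_extend (phig \<pi> \<rho>) (frag_extend psig q)"])
  fix k assume "k \<in> tgens (zmod S \<pi>) (zmod T \<rho>) x"
  then obtain z t a b where k: "k = (z, t, a, b)" "z * t = x" "a \<in> carrier (grp (zmod S \<pi>) z)" "b \<in> carrier (grp (zmod T \<rho>) t)"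
    by (cases k) (auto simp: tgens_def)
  have "frag_of (z, t, a, b) - frag_extend (phig \<pi> \<rho>) (pmul a b) \<in> trels (zmod S \<pi>) (zmod T \<rho>) x"
  proof (rule bil_A[OF hmwf_zmod hmwf_zmod grp_zmod k(4) k(2), where L = "\<lambda>a. frag_extend (phig \<pi> \<rho>) (pmul a b)"])
    show "Poly_Mapping.keys a \<subseteq> bas S \<pi> z" using k(3) by (simp add: carrier_zmod)
    show "frag_extend (phig \<pi> \<rho>) (pmul 0 b) = 0" by simp
    show "frag_extend (phig \<pi> \<rho>) (pmul (a1 - a2) b) = frag_extend (phig \<pi> \<rho>) (pmul a1 b) - frag_extend (phig \<pi> \<rho>) (pmul a2 b)" for a1 a2
      by (simp add: pmul_diff1 frag_extend_diff)
  next
    fix j assume "j \<in> bas S \<pi> z"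
    then obtain u s where j: "j = (u, s)" "s \<in> S" "u * \<pi> s = z" by blast
    show "frag_of (z, t, frag_of j, b) - frag_extend (phig \<pi> \<rho>) (pmul (frag_of j) b) \<in> trels (zmod S \<pi>) (zmod T \<rho>) x"
    proof (rule bil_B[OF hmwf_zmod hmwf_zmod grp_zmod _ k(2), where L = "\<lambda>b. frag_extend (phig \<pi> \<rho>) (pmul (frag_of j) b)"])
      show "frag_of j \<in> carrier (grp (zmod S \<pi>) z)" using j by (simp add: carrier_zmod keys_frag_of)
      show "Poly_Mapping.keys b \<subseteq> bas T \<rho> t" using k(4) by (simp add: carrier_zmod)
      show "frag_extend (phig \<pi> \<rho>) (pmul (frag_of j) 0) = 0" by simp
      show "frag_extend (phig \<pi> \<rho>) (pmul (frag_of j) (b1 - b2)) = frag_extend (phig \<pi> \<rho>) (pmul (frag_of j) b1) - frag_extend (phig \<pi> \<rho>) (pmul (frag_of j) b2)" for b1 b2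
        by (simp add: pmul_diff2 frag_extend_diff)
    next
      fix i assume "i \<in> bas T \<rho> t"
      then obtain v t' where i: "i = (v, t')" "t' \<in> T" "v * \<rho> t' = t" by blast
      have R: "frag_of (z * v, \<rho> t', act (zmod S \<pi>) z v (frag_of (u, s)), frag_of (1, t'))
           - frag_of (z, v * \<rho> t', frag_of (u, s), act (zmod T \<rho>) (\<rho> t') v (frag_of (1, t')))
           \<in> trels (zmod S \<pi>) (zmod T \<rho>) x"
      proof (rule trelgen3)
        show "v * z * \<rho> t' = x" using k(2) i(3) by (auto simp: ac_simps)
        show "frag_of (u, s) \<in> carrier (grp (zmod S \<pi>) z)" using j by (simp add: carrier_zmod keys_frag_of)
        show "frag_of (1, t') \<in> carrier (grp (zmod T \<rho>) (\<rho> t'))" using i by (simp add: carrier_zmod keys_frag_of)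
      qed
      have e1: "z * v = u * v * \<pi> s" using j(3) by (auto simp: ac_simps)
      have e2: "v * \<rho> t' = t" by (rule i(3))
      have "frag_of (z, t, frag_of j, frag_of i) - frag_extend (phig \<pi> \<rho>) (pmul (frag_of j) (frag_of i))
            = - (frag_of (z * v, \<rho> t', act (zmod S \<pi>) z v (frag_of (u, s)), frag_of (1, t'))
           - frag_of (z, v * \<rho> t', frag_of (u, s), act (zmod T \<rho>) (\<rho> t') v (frag_of (1, t'))))"
        unfolding e1 e2 j(1) i(1) by (simp add: pmul_of phig_def act_zmod_of)
      then show "frag_of (z, t, frag_of j, frag_of i) - frag_extend (phig \<pi> \<rho>) (pmul (frag_of j) (frag_of i)) \<in> trels (zmod S \<pi>) (zmod T \<rho>) x"
        using zc_minus[OF zc_trels[OF hmwf_zmod hmwf_zmod] R] by simp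
    qed
  qed
  then show "frag_of k - frag_extend (phig \<pi> \<rho>) (frag_extend psig (frag_of k)) \<in> trels (zmod S \<pi>) (zmod T \<rho>) x"
    by (simp add: k(1) psig_def)
qed (simp_all add: frag_extend_diff)


lemma zPhi_iso: "hm_iso (zmod (S \<times> T) (prod_over \<pi> \<rho>)) (tensor (zmod S \<pi>) (zmod T \<rho>)) (zPhi S \<pi> T \<rho>)"
proof -
  let ?ZS = "zmod S \<pi>" and ?ZT = "zmod T \<rho>" and ?Z = "zmod (S \<times> T) (prod_over \<pi> \<rho>)"
  note wS = hmwf_zmod[of S \<pi>] and wT = hmwf_zmod[of T \<rho>]
  have carr: "zPhi S \<pi> T \<rho> x p \<in> carrier (grp (tensor ?ZS ?ZT) x)" if "p \<in> carrier (grp ?Z x)" for x p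
  proof -
    have "frag_extend (phig \<pi> \<rho>) p \<in> carrier (tfree ?ZS ?ZT x)"
      using phig_keys that by (simp add: carrier_zmod carrier_tfree)
    then show ?thesis by (simp add: zPhi_eq carrier_tensor[OF wS wT])
  qed
  have hom: "zPhi S \<pi> T \<rho> x \<in> hom (grp ?Z x) (grp (tensor ?ZS ?ZT) x)" for x
    apply (rule homI)
     apply (erule carr)
    by (simp add: mult_zmod zPhi_eq frag_extend_add mult_tensor[OF wS wT])
  have nat: "zPhi S \<pi> T \<rho> (x * y) (act ?Z x y p) = act (tensor ?ZS ?ZT) x y (zPhi S \<pi> T \<rho> x p)" for x y p
  proof -
    have "act (tensor ?ZS ?ZT) x y (zPhi S \<pi> T \<rho> x p) = tcls ?ZS ?ZT (x * y) (frag_extend (tsh ?ZS y) (frag_extend (phig \<pi> \<rho>) p))"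
      unfolding act_tensor zPhi_eq
      by (rule tcls_rep_map[OF wS wT wS wT]) (rule tsh_rels[OF hmok_zmod wT])
    also have "frag_extend (tsh ?ZS y) (frag_extend (phig \<pi> \<rho>) p) = frag_extend (phig \<pi> \<rho>) (act ?Z x y p)"
      unfolding act_zmod frag_extend_frag_extend
      by (rule lin_eq[OF subset_UNIV]) (auto simp: phig_def tsh_def act_zmod_of ac_simps)
    finally show ?thesis by (simp add: zPhi_eq)
  qed
  have inj: "inj_on (zPhi S \<pi> T \<rho> x) (carrier (grp ?Z x))" for x
  proof (rule inj_onI)
    fix p p' assume "p \<in> carrier (grp ?Z x)" "p' \<in> carrier (grp ?Z x)" "zPhi S \<pi> T \<rho> x p = zPhi S \<pi> T \<rho> x p'"
    then have "frag_extend (phig \<pi> \<rho>) p - frag_extend (phig \<pi> \<rho>) p' \<in> trels ?ZS ?ZT x"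
      by (simp add: zPhi_eq tcls_eqD[OF wS wT])
    then have "frag_extend psig (frag_extend (phig \<pi> \<rho>) p - frag_extend (phig \<pi> \<rho>) p') = 0"
      by (rule psig_rels)
    then show "p = p'" by (simp add: frag_extend_diff psig_phig)
  qed
  have surj: "zPhi S \<pi> T \<rho> x ` carrier (grp ?Z x) = carrier (grp (tensor ?ZS ?ZT) x)" for x
  proof (intro equalityI subsetI)
    fix c assume "c \<in> zPhi S \<pi> T \<rho> x ` carrier (grp ?Z x)"
    then show "c \<in> carrier (grp (tensor ?ZS ?ZT) x)" using carr by blast
  next
    fix c assume "c \<in> carrier (grp (tensor ?ZS ?ZT) x)"
    then obtain q where q: "q \<in> carrier (tfree ?ZS ?ZT x)" "c = tcls ?ZS ?ZT x q"
      by (auto simp: carrier_tensor[OF wS wT])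
    have p: "frag_extend psig q \<in> carrier (grp ?Z x)"
      using psig_keys q(1) by (simp add: carrier_zmod carrier_tfree)
    have "q - frag_extend (phig \<pi> \<rho>) (frag_extend psig q) \<in> trels ?ZS ?ZT x"
      using phig_psig q(1) by (simp add: carrier_tfree)
    then have "zPhi S \<pi> T \<rho> x (frag_extend psig q) = c"
      unfolding zPhi_eq q(2) by (rule tcls_eqI[OF wS wT, symmetric])
    then show "c \<in> zPhi S \<pi> T \<rho> x ` carrier (grp ?Z x)" using p by blast
  qed
  show ?thesis
    unfolding hm_iso_def hm_hom_def bij_betw_def using hom nat inj surj by blast
qed

lemma keys_single_eq: "Poly_Mapping.keys p \<subseteq> {k} \<Longrightarrow> p = frag_cmul (poly_mapping.lookup p k) (frag_of k)"
  by (rule poly_mapping_eqI) (auto simp: lookup_single in_keys_iff)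

lemma keys_single_sum: "Poly_Mapping.keys p \<subseteq> {k} \<Longrightarrow> (\<Sum>j \<in> Poly_Mapping.keys p. poly_mapping.lookup p j) = poly_mapping.lookup p k"
  by (cases "Poly_Mapping.keys p = {}") (auto simp: subset_singleton_iff in_keys_iff)

lemma carrier_unit: "p \<in> carrier (grp (zmod unit_set unit_over) x) \<longleftrightarrow> Poly_Mapping.keys p \<subseteq> {(x, ())}"
  by (auto simp: carrier_zmod unit_set_def unit_over_def)

lemma zPsi_eq: "Poly_Mapping.keys p \<subseteq> {(x, ())} \<Longrightarrow> zPsi x p = poly_mapping.lookup p (x, ())"
  by (simp add: zPsi_def keys_single_sum)

lemma zPsi_iso: "hm_iso (zmod unit_set unit_over) (zunit :: ('m::comm_monoid_mult, int) hmmod) zPsi"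
proof -
  let ?Z = "zmod unit_set (unit_over :: unit \<Rightarrow> 'm)"
  have hom: "zPsi x \<in> hom (grp ?Z x) (grp (zunit :: ('m, int) hmmod) x)" for x :: 'm
  proof (rule homI)
    fix p q assume "p \<in> carrier (grp ?Z x)" "q \<in> carrier (grp ?Z x)"
    then show "zPsi x (p \<otimes>\<^bsub>grp ?Z x\<^esub> q) = zPsi x p \<otimes>\<^bsub>grp zunit x\<^esub> zPsi x q"
      by (simp add: carrier_unit mult_zmod zPsi_eq keys_add_sub lookup_add zunit_def integer_group_def)
  qed (simp add: zunit_def)
  have nat: "zPsi (x * y) (act ?Z x y p) = act (zunit :: ('m, int) hmmod) x y (zPsi x p)"
    if "p \<in> carrier (grp ?Z x)" for x y :: 'm and p
  proof -
    have k: "Poly_Mapping.keys p \<subseteq> {(x, ())}" using that by (simp add: carrier_unit)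
    have "act ?Z x y p = frag_cmul (poly_mapping.lookup p (x, ())) (frag_of (x * y, ()))"
      by (subst keys_single_eq[OF k]) (simp add: act_zmod frag_extend_cmul)
    moreover have "Poly_Mapping.keys (frag_cmul (poly_mapping.lookup p (x, ())) (frag_of (x * y, ()))) \<subseteq> {(x * y, ())}"
      using keys_cmul[of _ "frag_of (x * y, ())"] by (simp add: keys_frag_of)
    ultimately show ?thesis using k
      by (simp add: zPsi_eq zunit_def)
  qed
  have bij: "bij_betw (zPsi x) (carrier (grp ?Z x)) (carrier (grp (zunit :: ('m, int) hmmod) x))" for x :: 'm
  proof (rule bij_betwI[where g = "\<lambda>n. frag_cmul n (frag_of (x, ()))"])
    show "zPsi x \<in> carrier (grp ?Z x) \<rightarrow> carrier (grp zunit x)" by (simp add: zunit_def)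
    show "(\<lambda>n. frag_cmul n (frag_of (x, ()))) \<in> carrier (grp (zunit :: ('m, int) hmmod) x) \<rightarrow> carrier (grp ?Z x)"
      by (auto simp: carrier_unit keys_frag_of dest: subsetD[OF keys_cmul])
    fix p assume "p \<in> carrier (grp ?Z x)"
    then have k: "Poly_Mapping.keys p \<subseteq> {(x, ())}" by (simp add: carrier_unit)
    show "frag_cmul (zPsi x p) (frag_of (x, ())) = p"
      using keys_single_eq[OF k] by (simp add: zPsi_eq[OF k])
  next
    fix n :: int
    have k: "Poly_Mapping.keys (frag_cmul n (frag_of (x, ()))) \<subseteq> {(x, ())}"
      using keys_cmul[of n "frag_of (x, ())"] by (simp add: keys_frag_of)
    show "zPsi x (frag_cmul n (frag_of (x, ()))) = n" by (simp add: zPsi_eq[OF k])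
  qed
  show ?thesis unfolding hm_iso_def hm_hom_def using hom nat bij by blast
qed


definition thg :: "('m \<Rightarrow> 'a \<Rightarrow> 'a2) \<Rightarrow> ('m \<Rightarrow> 'b \<Rightarrow> 'b2) \<Rightarrow> 'm \<times> 'm \<times> 'a \<times> 'b \<Rightarrow> ('m \<times> 'm \<times> 'a2 \<times> 'b2 \<Rightarrow>\<^sub>0 int)" where
  "thg f g = (\<lambda>(z, t, a, b). frag_of (z, t, f z a, g t b))"

lemma tensor_hom_eq: "tensor_hom A' B' f g x c = tcls A' B' x (frag_extend (thg f g) (rep c))"
  unfolding tensor_hom_def thg_def ..

lemma hm_hom_closed: "hm_hom A A' f \<Longrightarrow> a \<in> carrier (grp A z) \<Longrightarrow> f z a \<in> carrier (grp A' z)"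
proof -
  assume h: "hm_hom A A' f" and a: "a \<in> carrier (grp A z)"
  have H: "f z \<in> hom (grp A z) (grp A' z)" using h by (simp add: hm_hom_def)
  show ?thesis by (rule hom_in_carrier[OF H a])
qed
lemma hm_hom_mult: "hm_hom A A' f \<Longrightarrow> a \<in> carrier (grp A z) \<Longrightarrow> a' \<in> carrier (grp A z) \<Longrightarrow>
    f z (a \<otimes>\<^bsub>grp A z\<^esub> a') = f z a \<otimes>\<^bsub>grp A' z\<^esub> f z a'"
proof -
  assume h: "hm_hom A A' f" and a: "a \<in> carrier (grp A z)" "a' \<in> carrier (grp A z)"
  have H: "f z \<in> hom (grp A z) (grp A' z)" using h by (simp add: hm_hom_def)
  show ?thesis by (rule hom_mult[OF H a])
qed
lemma hm_hom_nat: "hm_hom A A' f \<Longrightarrow> a \<in> carrier (grp A z) \<Longrightarrow> f (z * y) (act A z y a) = act A' z y (f z a)"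
  by (simp add: hm_hom_def)

lemma hm_hom_id: "hm_hom A A (\<lambda>y q. q)"
  by (simp add: hm_hom_def hom_def)

lemma thg_rels:
  assumes wA: "hmwf A" and wB: "hmwf B" and wA': "hmwf A'" and wB': "hmwf B'"
    and f: "hm_hom A A' f" and g: "hm_hom B B' g" and r: "r \<in> trels A B x"
  shows "frag_extend (thg f g) r \<in> trels A' B' x"
proof (rule trels_map[OF wA wB zc_trels[OF wA' wB'] _ r])
  fix k assume "k \<in> trelgens A B x"
  then show "frag_extend (thg f g) k \<in> trels A' B' x"
    unfolding trelgens_def
  proof (elim UnE CollectE exE conjE)
    fix z t a a' b assume *: "k = frag_of (z, t, a \<otimes>\<^bsub>grp A z\<^esub> a', b) - frag_of (z, t, a, b) - frag_of (z, t, a', b)"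
      "z * t = x" "a \<in> carrier (grp A z)" "a' \<in> carrier (grp A z)" "b \<in> carrier (grp B t)"
    from trelgen1[OF *(2) hm_hom_closed[OF f *(3)] hm_hom_closed[OF f *(4)] hm_hom_closed[OF g *(5)]]
    show ?thesis unfolding *(1) by (simp add: frag_extend_diff thg_def hm_hom_mult[OF f *(3,4)])
  next
    fix z t a b b' assume *: "k = frag_of (z, t, a, b \<otimes>\<^bsub>grp B t\<^esub> b') - frag_of (z, t, a, b) - frag_of (z, t, a, b')"
      "z * t = x" "a \<in> carrier (grp A z)" "b \<in> carrier (grp B t)" "b' \<in> carrier (grp B t)"
    from trelgen2[OF *(2) hm_hom_closed[OF f *(3)] hm_hom_closed[OF g *(4)] hm_hom_closed[OF g *(5)]]
    show ?thesis unfolding *(1) by (simp add: frag_extend_diff thg_def hm_hom_mult[OF g *(4,5)])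
  next
    fix u v w a b assume *: "k = frag_of (v * u, w, act A v u a, b) - frag_of (v, u * w, a, act B w u b)"
      "u * v * w = x" "a \<in> carrier (grp A v)" "b \<in> carrier (grp B w)"
    have e: "u * w = w * u" by (simp add: mult.commute)
    have "frag_extend (thg f g) k = frag_of (v * u, w, act A' v u (f v a), g w b) - frag_of (v, u * w, f v a, act B' w u (g w b))"
      unfolding *(1) by (simp add: frag_extend_diff thg_def hm_hom_nat[OF f *(3)] e hm_hom_nat[OF g *(4)])
    then show ?thesis using trelgen3[OF *(2) hm_hom_closed[OF f *(3)] hm_hom_closed[OF g *(4)]] by simp
  qed
qed

lemma tensor_hom_tcls:
  assumes "hmwf A" "hmwf B" "hmwf A'" "hmwf B'" "hm_hom A A' f" "hm_hom B B' g"
  shows "tensor_hom A' B' f g x (tcls A B x q) = tcls A' B' x (frag_extend (thg f g) q)"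
  unfolding tensor_hom_eq by (rule tcls_rep_map[OF assms(1-4)]) (rule thg_rels[OF assms])

lemma hm_hom_zPhi: "hm_hom (zmod (S \<times> T) (prod_over \<pi> \<rho>)) (tensor (zmod S \<pi>) (zmod T \<rho>)) (zPhi S \<pi> T \<rho>)"
  using zPhi_iso[of S T \<pi> \<rho>] unfolding hm_iso_def by blast
lemma hm_hom_zPsi: "hm_hom (zmod unit_set unit_over) (zunit :: ('m::comm_monoid_mult, int) hmmod) zPsi"
  using zPsi_iso unfolding hm_iso_def by blast

lemma hm_hom_zmap:
  assumes "over_hom S \<pi> S' \<pi>' \<phi>"
  shows "hm_hom (zmod S \<pi>) (zmod S' \<pi>') (zmap \<phi>)"
  unfolding hm_hom_def
proof (intro conjI allI impI)
  fix x
  show "zmap \<phi> x \<in> hom (grp (zmod S \<pi>) x) (grp (zmod S' \<pi>') x)"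
  proof (rule homI)
    fix a assume "a \<in> carrier (grp (zmod S \<pi>) x)"
    then show "zmap \<phi> x a \<in> carrier (grp (zmod S' \<pi>') x)"
      unfolding carrier_zmod zmap_def using assms
      by (intro keys_frag_extend_sub) (auto simp: keys_frag_of over_hom_def)
  qed (simp add: mult_zmod zmap_def frag_extend_add)
next
  fix x y a
  show "zmap \<phi> (x * y) (act (zmod S \<pi>) x y a) = act (zmod S' \<pi>') x y (zmap \<phi> x a)"
    by (simp add: zmap_def act_zmod frag_extend_frag_extend case_prod_unfold)
qed

lemma coh_nat:
  assumes \<phi>: "over_hom S \<pi> S' \<pi>' \<phi>" and \<chi>: "over_hom T \<rho> T' \<rho>' \<chi>"
    and p: "p \<in> carrier (grp (zmod (S \<times> T) (prod_over \<pi> \<rho>)) x)"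
  shows "tensor_hom (zmod S' \<pi>') (zmod T' \<rho>') (zmap \<phi>) (zmap \<chi>) x (zPhi S \<pi> T \<rho> x p)
       = zPhi S' \<pi>' T' \<rho>' x (zmap (map_prod \<phi> \<chi>) x p)"
proof -
  have "tensor_hom (zmod S' \<pi>') (zmod T' \<rho>') (zmap \<phi>) (zmap \<chi>) x (zPhi S \<pi> T \<rho> x p)
      = tcls (zmod S' \<pi>') (zmod T' \<rho>') x (frag_extend (thg (zmap \<phi>) (zmap \<chi>)) (frag_extend (phig \<pi> \<rho>) p))"
    unfolding zPhi_eq by (rule tensor_hom_tcls[OF hmwf_zmod hmwf_zmod hmwf_zmod hmwf_zmod hm_hom_zmap[OF \<phi>] hm_hom_zmap[OF \<chi>]])
  also have "frag_extend (thg (zmap \<phi>) (zmap \<chi>)) (frag_extend (phig \<pi> \<rho>) p) = frag_extend (phig \<pi>' \<rho>') (zmap (map_prod \<phi> \<chi>) x p)"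
    unfolding frag_extend_frag_extend zmap_def
  proof (rule lin_eq)
    show "Poly_Mapping.keys p \<subseteq> bas (S \<times> T) (prod_over \<pi> \<rho>) x" using p by (simp add: carrier_zmod)
    fix k assume "k \<in> bas (S \<times> T) (prod_over \<pi> \<rho>) x"
    then obtain u s t where k: "k = (u, (s, t))" "s \<in> S" "t \<in> T" by blast
    then have "\<pi>' (\<phi> s) = \<pi> s" "\<rho>' (\<chi> t) = \<rho> t" using \<phi> \<chi> by (auto simp: over_hom_def)
    then show "frag_extend (thg (\<lambda>x. frag_extend (\<lambda>(u, s). frag_of (u, \<phi> s))) (\<lambda>x. frag_extend (\<lambda>(u, s). frag_of (u, \<chi> s)))) (phig \<pi> \<rho> k) =
         frag_extend (phig \<pi>' \<rho>') ((\<lambda>(u, s). frag_of (u, map_prod \<phi> \<chi> s)) k)"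
      by (simp add: k thg_def phig_def)
  qed
  finally show ?thesis by (simp add: zPhi_eq)
qed

definition swg :: "'m \<times> 'm \<times> 'a \<times> 'b \<Rightarrow> ('m \<times> 'm \<times> 'b \<times> 'a \<Rightarrow>\<^sub>0 int)" where
  "swg = (\<lambda>(z, t, a, b). frag_of (t, z, b, a))"

lemma tswap_eq: "tswap A B x c = tcls B A x (frag_extend swg (rep c))"
  by (simp add: tswap_def swg_def)

lemma swg_rels:
  assumes wA: "hmwf A" and wB: "hmwf B" and r: "r \<in> trels A B x"
  shows "frag_extend swg r \<in> trels B A x"
proof (rule trels_map[OF wA wB zc_trels[OF wB wA] _ r])
  fix k assume "k \<in> trelgens A B x"
  then show "frag_extend swg k \<in> trels B A x"
    unfolding trelgens_def
  proof (elim UnE CollectE exE conjE)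
    fix z t a a' b assume *: "k = frag_of (z, t, a \<otimes>\<^bsub>grp A z\<^esub> a', b) - frag_of (z, t, a, b) - frag_of (z, t, a', b)"
      "z * t = x" "a \<in> carrier (grp A z)" "a' \<in> carrier (grp A z)" "b \<in> carrier (grp B t)"
    have "t * z = x" using *(2) by (simp add: mult.commute)
    from trelgen2[OF this *(5,3,4)]
    show ?thesis unfolding *(1) by (simp add: frag_extend_diff swg_def)
  next
    fix z t a b b' assume *: "k = frag_of (z, t, a, b \<otimes>\<^bsub>grp B t\<^esub> b') - frag_of (z, t, a, b) - frag_of (z, t, a, b')"
      "z * t = x" "a \<in> carrier (grp A z)" "b \<in> carrier (grp B t)" "b' \<in> carrier (grp B t)"
    have "t * z = x" using *(2) by (simp add: mult.commute)
    from trelgen1[OF this *(4,5,3)]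
    show ?thesis unfolding *(1) by (simp add: frag_extend_diff swg_def)
  next
    fix u v w a b assume *: "k = frag_of (v * u, w, act A v u a, b) - frag_of (v, u * w, a, act B w u b)"
      "u * v * w = x" "a \<in> carrier (grp A v)" "b \<in> carrier (grp B w)"
    have 1: "u * w * v = x" using *(2) by (simp add: ac_simps)
    have e: "v * u = u * v" "u * w = w * u" by (simp_all add: mult.commute)
    have "frag_extend swg k = - (frag_of (w * u, v, act B w u b, a) - frag_of (w, u * v, b, act A v u a))"
      unfolding *(1) by (simp add: frag_extend_diff swg_def e)
    then show ?thesis using zc_minus[OF zc_trels[OF wB wA] trelgen3[OF 1 *(4,3)]] by simp
  qed
qed

lemma coh_swap:
  assumes p: "p \<in> carrier (grp (zmod (S \<times> T) (prod_over \<pi> \<rho>)) x)"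
  shows "tswap (zmod S \<pi>) (zmod T \<rho>) x (zPhi S \<pi> T \<rho> x p) = zPhi T \<rho> S \<pi> x (zmap prod.swap x p)"
proof -
  note w = hmwf_zmod
  have "tswap (zmod S \<pi>) (zmod T \<rho>) x (zPhi S \<pi> T \<rho> x p) = tcls (zmod T \<rho>) (zmod S \<pi>) x (frag_extend swg (frag_extend (phig \<pi> \<rho>) p))"
    unfolding zPhi_eq tswap_eq by (rule tcls_rep_map[OF w w w w]) (rule swg_rels[OF w w])
  also have "\<dots> = zPhi T \<rho> S \<pi> x (zmap prod.swap x p)"
    unfolding zPhi_eq
  proof (rule tcls_eqI[OF w w])
    show "frag_extend swg (frag_extend (phig \<pi> \<rho>) p) - frag_extend (phig \<rho> \<pi>) (zmap prod.swap x p) \<in> trels (zmod T \<rho>) (zmod S \<pi>) x"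
    proof (rule lin_N[OF zc_trels[OF w w], where F = "\<lambda>p. frag_extend swg (frag_extend (phig \<pi> \<rho>) p) - frag_extend (phig \<rho> \<pi>) (zmap prod.swap x p)"])
      show "Poly_Mapping.keys p \<subseteq> bas (S \<times> T) (prod_over \<pi> \<rho>) x" using p by (simp add: carrier_zmod)
      fix k assume "k \<in> bas (S \<times> T) (prod_over \<pi> \<rho>) x"
      then obtain u s t where k: "k = (u, (s, t))" "s \<in> S" "t \<in> T" "u * (\<pi> s * \<rho> t) = x" by (auto simp: prod_over_def)
      have R: "frag_of (\<rho> t * u, \<pi> s, act (zmod T \<rho>) (\<rho> t) u (frag_of (1, t)), frag_of (1, s))
              - frag_of (\<rho> t, u * \<pi> s, frag_of (1, t), act (zmod S \<pi>) (\<pi> s) u (frag_of (1, s))) \<in> trels (zmod T \<rho>) (zmod S \<pi>) x"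
        by (rule trelgen3) (use k in \<open>auto simp: carrier_zmod keys_frag_of ac_simps\<close>)
      have e: "\<rho> t * u = u * \<rho> t" by (simp add: mult.commute)
      have "frag_extend swg (frag_extend (phig \<pi> \<rho>) (frag_of k)) - frag_extend (phig \<rho> \<pi>) (zmap prod.swap x (frag_of k))
         = - (frag_of (\<rho> t * u, \<pi> s, act (zmod T \<rho>) (\<rho> t) u (frag_of (1, t)), frag_of (1, s))
              - frag_of (\<rho> t, u * \<pi> s, frag_of (1, t), act (zmod S \<pi>) (\<pi> s) u (frag_of (1, s))))"
        by (simp add: k(1) swg_def phig_def zmap_def act_zmod_of e)
      then show "frag_extend swg (frag_extend (phig \<pi> \<rho>) (frag_of k)) - frag_extend (phig \<rho> \<pi>) (zmap prod.swap x (frag_of k)) \<in> trels (zmod T \<rho>) (zmod S \<pi>) x"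
        using zc_minus[OF zc_trels[OF w w] R] by simp
    qed (simp_all add: frag_extend_diff zmap_def)
  qed
  finally show ?thesis .
qed


lemma finprod_free:
  assumes "finite K" "g \<in> K \<rightarrow> carrier (free_Abelian_group Y)"
  shows "finprod (free_Abelian_group Y) g K = sum g K"
proof -
  interpret comm_monoid "free_Abelian_group Y"
    using abelian_free_Abelian_group[of Y] by (simp add: comm_group_def)
  show ?thesis using assms
  proof (induction K rule: finite_induct)
    case empty then show ?case by simp
  next
    case (insert a F)
    then have "g \<in> F \<rightarrow> carrier (free_Abelian_group Y)" "g a \<in> carrier (free_Abelian_group Y)" by auto
    then show ?case using insert by simp
  qed
qed

lemma gext_free:
  assumes "\<And>k. k \<in> Poly_Mapping.keys p \<Longrightarrow> Poly_Mapping.keys (f k) \<subseteq> Y"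
  shows "gext (free_Abelian_group Y) f p = frag_extend f p"
proof -
  have "gext (free_Abelian_group Y) f p = (\<Sum>k \<in> Poly_Mapping.keys p. f k [^]\<^bsub>free_Abelian_group Y\<^esub> poly_mapping.lookup p k)"
    unfolding gext_def
  proof (rule finprod_free)
    show "(\<lambda>k. f k [^]\<^bsub>free_Abelian_group Y\<^esub> poly_mapping.lookup p k) \<in> Poly_Mapping.keys p \<rightarrow> carrier (free_Abelian_group Y)"
    proof
      fix k assume k: "k \<in> Poly_Mapping.keys p"
      have "Poly_Mapping.keys (frag_cmul (poly_mapping.lookup p k) (f k)) \<subseteq> Y"
        using keys_cmul[of "poly_mapping.lookup p k" "f k"] assms[OF k] by blast
      then show "f k [^]\<^bsub>free_Abelian_group Y\<^esub> poly_mapping.lookup p k \<in> carrier (free_Abelian_group Y)"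
        using assms[OF k] by simp
    qed
  qed simp
  also have "\<dots> = frag_extend f p"
    unfolding frag_extend_def by (rule sum.cong) (simp_all add: assms)
  finally show ?thesis .
qed

lemma thg_keys:
  assumes f: "hm_hom A A' f" and g: "hm_hom B B' g" and q: "Poly_Mapping.keys q \<subseteq> tgens A B x"
  shows "Poly_Mapping.keys (frag_extend (thg f g) q) \<subseteq> tgens A' B' x"
proof (rule keys_frag_extend_sub)
  fix k assume "k \<in> Poly_Mapping.keys q"
  then have "k \<in> tgens A B x" using q by blast
  then obtain z t a b where k: "k = (z, t, a, b)" "z * t = x" "a \<in> carrier (grp A z)" "b \<in> carrier (grp B t)"
    by (cases k) (auto simp: tgens_def)
  show "Poly_Mapping.keys (thg f g k) \<subseteq> tgens A' B' x"
    by (simp add: k thg_def keys_frag_of) (intro tgensI k(2) hm_hom_closed[OF f k(3)] hm_hom_closed[OF g k(4)])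
qed

lemma rep_keys:
  assumes "hmwf A" "hmwf B" "Poly_Mapping.keys q \<subseteq> tgens A B x"
  shows "Poly_Mapping.keys (rep (tcls A B x q)) \<subseteq> tgens A B x"
proof -
  have "Poly_Mapping.keys (rep (tcls A B x q) - q) \<subseteq> tgens A B x"
    by (rule trels_carrier[OF assms(1,2) rep_tcls[OF assms(1,2)]])
  then have "Poly_Mapping.keys ((rep (tcls A B x q) - q) + q) \<subseteq> tgens A B x"
    using assms(3) by (rule keys_add_sub)
  then show ?thesis by simp
qed

definition rug :: "('m::comm_monoid_mult) \<times> 'm \<times> ('m \<times> 's \<Rightarrow>\<^sub>0 int) \<times> int \<Rightarrow> ('m \<times> 's \<Rightarrow>\<^sub>0 int)" where
  "rug = (\<lambda>(z, t, a, n). frag_cmul n (frag_extend (\<lambda>(u, s). frag_of (u * t, s)) a))"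

definition lug :: "('m::comm_monoid_mult) \<times> 'm \<times> int \<times> ('m \<times> 's \<Rightarrow>\<^sub>0 int) \<Rightarrow> ('m \<times> 's \<Rightarrow>\<^sub>0 int)" where
  "lug = (\<lambda>(z, t, n, a). frag_cmul n (frag_extend (\<lambda>(u, s). frag_of (u * z, s)) a))"

lemma runit_eq:
  assumes "Poly_Mapping.keys c' \<subseteq> tgens (zmod S \<pi>) (zunit :: ('m::comm_monoid_mult, int) hmmod) x" "rep c = c'"
  shows "runit (zmod S \<pi>) x c = frag_extend rug c'"
proof -
  have "runit (zmod S \<pi>) x c = frag_extend (\<lambda>(z, t, a, n). act (zmod S \<pi>) z t a [^]\<^bsub>grp (zmod S \<pi>) x\<^esub> n) c'"
    unfolding runit_def assms(2) grp_zmod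
  proof (rule gext_free)
    fix k assume "k \<in> Poly_Mapping.keys c'"
    then obtain z t a n where k: "k = (z, t, a, n)" "z * t = x" "a \<in> carrier (grp (zmod S \<pi>) z)"
      using assms(1) by (cases k) (auto simp: tgens_def)
    have "act (zmod S \<pi>) z t a \<in> carrier (grp (zmod S \<pi>) x)"
      using hmwf_act[OF hmwf_zmod k(3), of t] k(2) by simp
    then show "Poly_Mapping.keys ((\<lambda>(z, t, a, n). act (zmod S \<pi>) z t a [^]\<^bsub>free_Abelian_group (bas S \<pi> x)\<^esub> n) k) \<subseteq> bas S \<pi> x"
      by (simp add: k(1) carrier_zmod grp_zmod) (meson keys_cmul order_trans)
  qed
  also have "\<dots> = frag_extend rug c'"
  proof (rule frag_extend_eq)
    fix k assume "k \<in> Poly_Mapping.keys c'"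
    then obtain z t a n where k: "k = (z, t, a, n)" "z * t = x" "a \<in> carrier (grp (zmod S \<pi>) z)"
      using assms(1) by (cases k) (auto simp: tgens_def)
    have "act (zmod S \<pi>) z t a \<in> carrier (grp (zmod S \<pi>) x)"
      using hmwf_act[OF hmwf_zmod k(3), of t] k(2) by simp
    then show "(\<lambda>(z, t, a, n). act (zmod S \<pi>) z t a [^]\<^bsub>grp (zmod S \<pi>) x\<^esub> n) k = rug k"
      by (simp add: k(1) rug_def grp_zmod carrier_zmod act_zmod)
  qed
  finally show ?thesis .
qed

lemma lunit_eq:
  assumes "Poly_Mapping.keys c' \<subseteq> tgens (zunit :: ('m::comm_monoid_mult, int) hmmod) (zmod S \<pi>) x" "rep c = c'"
  shows "lunit (zmod S \<pi>) x c = frag_extend lug c'"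
proof -
  have "lunit (zmod S \<pi>) x c = frag_extend (\<lambda>(z, t, n, a). act (zmod S \<pi>) t z a [^]\<^bsub>grp (zmod S \<pi>) x\<^esub> n) c'"
    unfolding lunit_def assms(2) grp_zmod
  proof (rule gext_free)
    fix k assume "k \<in> Poly_Mapping.keys c'"
    then obtain z t a n where k: "k = (z, t, n, a)" "z * t = x" "a \<in> carrier (grp (zmod S \<pi>) t)"
      using assms(1) by (cases k) (auto simp: tgens_def)
    have "act (zmod S \<pi>) t z a \<in> carrier (grp (zmod S \<pi>) x)"
      using hmwf_act[OF hmwf_zmod k(3), of z] k(2) by (simp add: mult.commute)
    then show "Poly_Mapping.keys ((\<lambda>(z, t, n, a). act (zmod S \<pi>) t z a [^]\<^bsub>free_Abelian_group (bas S \<pi> x)\<^esub> n) k) \<subseteq> bas S \<pi> x"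
      by (simp add: k(1) carrier_zmod grp_zmod) (meson keys_cmul order_trans)
  qed
  also have "\<dots> = frag_extend lug c'"
  proof (rule frag_extend_eq)
    fix k assume "k \<in> Poly_Mapping.keys c'"
    then obtain z t a n where k: "k = (z, t, n, a)" "z * t = x" "a \<in> carrier (grp (zmod S \<pi>) t)"
      using assms(1) by (cases k) (auto simp: tgens_def)
    have "act (zmod S \<pi>) t z a \<in> carrier (grp (zmod S \<pi>) x)"
      using hmwf_act[OF hmwf_zmod k(3), of z] k(2) by (simp add: mult.commute)
    then show "(\<lambda>(z, t, n, a). act (zmod S \<pi>) t z a [^]\<^bsub>grp (zmod S \<pi>) x\<^esub> n) k = lug k"
      by (simp add: k(1) lug_def grp_zmod carrier_zmod act_zmod)
  qed
  finally show ?thesis .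
qed


lemma rug_rels:
  assumes r: "r \<in> trels (zmod S \<pi>) (zunit :: ('m::comm_monoid_mult, int) hmmod) x"
  shows "frag_extend rug r = 0"
proof -
  have "frag_extend rug r \<in> {0}"
  proof (rule trels_map[OF hmwf_zmod hmok_wf[OF hmok_zunit] zc_zero _ r])
    fix g assume "g \<in> trelgens (zmod S \<pi>) (zunit :: ('m, int) hmmod) x"
    then show "frag_extend rug g \<in> {0}"
      unfolding trelgens_def
      by (elim UnE CollectE exE conjE)
         (simp_all add: frag_extend_diff rug_def mult_zmod frag_extend_add frag_cmul_distrib frag_cmul_distrib2
            zunit_def integer_group_def act_zmod frag_extend_frag_extend case_prod_unfold ac_simps)
  qed
  then show ?thesis by simp
qed

lemma lug_rels:
  assumes r: "r \<in> trels (zunit :: ('m::comm_monoid_mult, int) hmmod) (zmod S \<pi>) x"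
  shows "frag_extend lug r = 0"
proof -
  have "frag_extend lug r \<in> {0}"
  proof (rule trels_map[OF hmok_wf[OF hmok_zunit] hmwf_zmod zc_zero _ r])
    fix g assume "g \<in> trelgens (zunit :: ('m, int) hmmod) (zmod S \<pi>) x"
    then show "frag_extend lug g \<in> {0}"
      unfolding trelgens_def
      by (elim UnE CollectE exE conjE)
         (simp_all add: frag_extend_diff lug_def mult_zmod frag_extend_add frag_cmul_distrib frag_cmul_distrib2
            zunit_def integer_group_def act_zmod frag_extend_frag_extend case_prod_unfold ac_simps)
  qed
  then show ?thesis by simp
qed

lemma zPsi_of: "zPsi x (frag_of k) = 1"
  by (simp add: zPsi_def keys_frag_of)

lemma coh_runit:
  assumes p: "p \<in> carrier (grp (zmod (S \<times> unit_set) (prod_over \<pi> unit_over)) x)"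
  shows "runit (zmod S \<pi>) x (tensor_hom (zmod S \<pi>) zunit (\<lambda>y q. q) zPsi x (zPhi S \<pi> unit_set unit_over x p)) = zmap fst x p"
proof -
  let ?Q = "frag_extend (thg (\<lambda>y q. q) zPsi) (frag_extend (phig \<pi> unit_over) p)"
  note wU = hmok_wf[OF hmok_zunit]
  have th: "tensor_hom (zmod S \<pi>) zunit (\<lambda>y q. q) zPsi x (zPhi S \<pi> unit_set unit_over x p) = tcls (zmod S \<pi>) zunit x ?Q"
    unfolding zPhi_eq by (rule tensor_hom_tcls[OF hmwf_zmod hmwf_zmod hmwf_zmod wU hm_hom_id hm_hom_zPsi])
  have kQ: "Poly_Mapping.keys ?Q \<subseteq> tgens (zmod S \<pi>) zunit x"
    by (rule thg_keys[OF hm_hom_id hm_hom_zPsi phig_keys]) (use p in \<open>simp add: carrier_zmod\<close>)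
  have "runit (zmod S \<pi>) x (tcls (zmod S \<pi>) zunit x ?Q) = frag_extend rug (rep (tcls (zmod S \<pi>) zunit x ?Q))"
    by (rule runit_eq[OF rep_keys[OF hmwf_zmod wU kQ] refl])
  also have "\<dots> = frag_extend rug (rep (tcls (zmod S \<pi>) zunit x ?Q) - ?Q) + frag_extend rug ?Q"
    by (simp add: frag_extend_diff)
  also have "frag_extend rug (rep (tcls (zmod S \<pi>) zunit x ?Q) - ?Q) = 0"
    by (rule rug_rels[OF rep_tcls[OF hmwf_zmod wU]])
  also have "frag_extend rug ?Q = zmap fst x p"
    unfolding frag_extend_frag_extend zmap_def
    by (rule lin_eq[OF subset_UNIV]) (auto simp: thg_def phig_def rug_def zPsi_of unit_over_def)
  finally show ?thesis by (simp add: th)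
qed

lemma coh_lunit:
  assumes p: "p \<in> carrier (grp (zmod (unit_set \<times> S) (prod_over unit_over \<pi>)) x)"
  shows "lunit (zmod S \<pi>) x (tensor_hom zunit (zmod S \<pi>) zPsi (\<lambda>y q. q) x (zPhi unit_set unit_over S \<pi> x p)) = zmap snd x p"
proof -
  let ?Q = "frag_extend (thg zPsi (\<lambda>y q. q)) (frag_extend (phig unit_over \<pi>) p)"
  note wU = hmok_wf[OF hmok_zunit]
  have th: "tensor_hom zunit (zmod S \<pi>) zPsi (\<lambda>y q. q) x (zPhi unit_set unit_over S \<pi> x p) = tcls zunit (zmod S \<pi>) x ?Q"
    unfolding zPhi_eq by (rule tensor_hom_tcls[OF hmwf_zmod hmwf_zmod wU hmwf_zmod hm_hom_zPsi hm_hom_id])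
  have kQ: "Poly_Mapping.keys ?Q \<subseteq> tgens zunit (zmod S \<pi>) x"
    by (rule thg_keys[OF hm_hom_zPsi hm_hom_id phig_keys]) (use p in \<open>simp add: carrier_zmod\<close>)
  have "lunit (zmod S \<pi>) x (tcls zunit (zmod S \<pi>) x ?Q) = frag_extend lug (rep (tcls zunit (zmod S \<pi>) x ?Q))"
    by (rule lunit_eq[OF rep_keys[OF wU hmwf_zmod kQ] refl])
  also have "\<dots> = frag_extend lug (rep (tcls zunit (zmod S \<pi>) x ?Q) - ?Q) + frag_extend lug ?Q"
    by (simp add: frag_extend_diff)
  also have "frag_extend lug (rep (tcls zunit (zmod S \<pi>) x ?Q) - ?Q) = 0"
    by (rule lug_rels[OF rep_tcls[OF wU hmwf_zmod]])
  also have "frag_extend lug ?Q = zmap snd x p"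
    unfolding frag_extend_frag_extend zmap_def
    by (rule lin_eq[OF subset_UNIV]) (auto simp: thg_def phig_def lug_def zPsi_of unit_over_def)
  finally show ?thesis by (simp add: th)
qed


definition asi :: "('m::comm_monoid_mult, 'b) hmmod \<Rightarrow> ('m, 'c) hmmod \<Rightarrow> 'm \<Rightarrow> 'c \<Rightarrow> 'm \<times> 'm \<times> 'a \<times> 'b \<Rightarrow>
    ('m \<times> 'm \<times> 'a \<times> ('m \<times> 'm \<times> 'b \<times> 'c \<Rightarrow>\<^sub>0 int) set \<Rightarrow>\<^sub>0 int)" where
  "asi B C t w = (\<lambda>(z1, t1, a, b). frag_of (z1, t1 * t, a, tcls B C (t1 * t) (frag_of (t1, t, b, w))))"

definition asg :: "('m::comm_monoid_mult, 'b) hmmod \<Rightarrow> ('m, 'c) hmmod \<Rightarrow>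
    'm \<times> 'm \<times> ('m \<times> 'm \<times> 'a \<times> 'b \<Rightarrow>\<^sub>0 int) set \<times> 'c \<Rightarrow>
    ('m \<times> 'm \<times> 'a \<times> ('m \<times> 'm \<times> 'b \<times> 'c \<Rightarrow>\<^sub>0 int) set \<Rightarrow>\<^sub>0 int)" where
  "asg B C = (\<lambda>(z, t, d, w). frag_extend (asi B C t w) (rep d))"

lemma tassoc_eq: "tassoc A B C x c = tcls A (tensor B C) x (frag_extend (asg B C) (rep c))"
  unfolding tassoc_def asg_def asi_def ..

lemma tcls_idx: "i = j \<Longrightarrow> tcls A B i q = tcls A B j q" by simp
lemma trels_idx: "r \<in> trels A B i \<Longrightarrow> i = j \<Longrightarrow> r \<in> trels A B j" by simp

context
  fixes A :: "('m::comm_monoid_mult, 'a) hmmod" and B :: "('m, 'b) hmmod" and C :: "('m, 'c) hmmod"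
  assumes oA: "hmok A" and oB: "hmok B" and wC: "hmwf C"
begin

lemma wA: "hmwf A" using oA by (rule hmok_wf)
lemma wB: "hmwf B" using oB by (rule hmok_wf)
lemma wBC: "hmwf (tensor B C)" using oB wC by (rule hmwf_tensor)
lemma wAB: "hmwf (tensor A B)" using oA wB by (rule hmwf_tensor)

lemma Xcarr: "b \<in> carrier (grp B t1) \<Longrightarrow> w \<in> carrier (grp C t) \<Longrightarrow>
   tcls B C (t1 * t) (frag_of (t1, t, b, w)) \<in> carrier (grp (tensor B C) (t1 * t))"
  unfolding carrier_tensor[OF wB wC] by (rule imageI) (simp add: carrier_tfree keys_frag_of tgensI)

lemma Xmult1: "b \<in> carrier (grp B t1) \<Longrightarrow> b' \<in> carrier (grp B t1) \<Longrightarrow> w \<in> carrier (grp C t) \<Longrightarrow>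
   tcls B C (t1 * t) (frag_of (t1, t, b \<otimes>\<^bsub>grp B t1\<^esub> b', w)) =
   tcls B C (t1 * t) (frag_of (t1, t, b, w)) \<otimes>\<^bsub>grp (tensor B C) (t1 * t)\<^esub> tcls B C (t1 * t) (frag_of (t1, t, b', w))"
  unfolding mult_tensor[OF wB wC]
  by (rule tcls_eqI[OF wB wC]) (simp add: trelgen1 diff_diff_eq[symmetric])

lemma Xmult2: "b \<in> carrier (grp B t1) \<Longrightarrow> w \<in> carrier (grp C t) \<Longrightarrow> w' \<in> carrier (grp C t) \<Longrightarrow>
   tcls B C (t1 * t) (frag_of (t1, t, b, w \<otimes>\<^bsub>grp C t\<^esub> w')) =
   tcls B C (t1 * t) (frag_of (t1, t, b, w)) \<otimes>\<^bsub>grp (tensor B C) (t1 * t)\<^esub> tcls B C (t1 * t) (frag_of (t1, t, b, w'))"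
  unfolding mult_tensor[OF wB wC]
  by (rule tcls_eqI[OF wB wC]) (simp add: trelgen2 diff_diff_eq[symmetric])

lemma asi_rels:
  assumes w: "w \<in> carrier (grp C t)" and r: "r \<in> trels A B z"
  shows "frag_extend (asi B C t w) r \<in> trels A (tensor B C) (z * t)"
proof (rule trels_map[OF wA wB zc_trels[OF wA wBC] _ r])
  fix g assume "g \<in> trelgens A B z"
  then show "frag_extend (asi B C t w) g \<in> trels A (tensor B C) (z * t)"
    unfolding trelgens_def
  proof (elim UnE CollectE exE conjE)
    fix z' t' a a' b assume *: "g = frag_of (z', t', a \<otimes>\<^bsub>grp A z'\<^esub> a', b) - frag_of (z', t', a, b) - frag_of (z', t', a', b)"
      "z' * t' = z" "a \<in> carrier (grp A z')" "a' \<in> carrier (grp A z')" "b \<in> carrier (grp B t')"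
    have i: "z' * (t' * t) = z * t" using *(2) by (simp add: mult.assoc[symmetric])
    from trelgen1[OF i *(3,4) Xcarr[OF *(5) w]]
    show ?thesis unfolding *(1) by (simp add: frag_extend_diff asi_def)
  next
    fix z' t' a b b' assume *: "g = frag_of (z', t', a, b \<otimes>\<^bsub>grp B t'\<^esub> b') - frag_of (z', t', a, b) - frag_of (z', t', a, b')"
      "z' * t' = z" "a \<in> carrier (grp A z')" "b \<in> carrier (grp B t')" "b' \<in> carrier (grp B t')"
    have i: "z' * (t' * t) = z * t" using *(2) by (simp add: mult.assoc[symmetric])
    from trelgen2[OF i *(3) Xcarr[OF *(4) w] Xcarr[OF *(5) w]]
    show ?thesis unfolding *(1) by (simp add: frag_extend_diff asi_def Xmult1[OF *(4,5) w])
  next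
    fix u v w' a b assume *: "g = frag_of (v * u, w', act A v u a, b) - frag_of (v, u * w', a, act B w' u b)"
      "u * v * w' = z" "a \<in> carrier (grp A v)" "b \<in> carrier (grp B w')"
    have i: "u * v * (w' * t) = z * t" using *(2) by (simp add: mult.assoc[symmetric])
    have act: "act (tensor B C) (w' * t) u (tcls B C (w' * t) (frag_of (w', t, b, w)))
       = tcls B C (w' * t * u) (frag_of (w' * u, t, act B w' u b, w))"
    proof -
      have "act (tensor B C) (w' * t) u (tcls B C (w' * t) (frag_of (w', t, b, w)))
          = tcls B C (w' * t * u) (frag_extend (tsh B u) (frag_of (w', t, b, w)))"
        unfolding act_tensor by (rule tcls_rep_map[OF wB wC wB wC]) (rule tsh_rels[OF oB wC])
      then show ?thesis by (simp add: tsh_def)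
    qed
    have e1: "w' * t * u = u * w' * t" "w' * u = u * w'" "u * (w' * t) = u * w' * t" by (simp_all add: ac_simps)
    have "frag_extend (asi B C t w) g = frag_of (v * u, w' * t, act A v u a, tcls B C (w' * t) (frag_of (w', t, b, w))) -
          frag_of (v, u * (w' * t), a, act (tensor B C) (w' * t) u (tcls B C (w' * t) (frag_of (w', t, b, w))))"
      unfolding *(1) act e1 by (simp add: frag_extend_diff asi_def)
    then show ?thesis using trelgen3[OF i *(3) Xcarr[OF *(4) w]] by simp
  qed
qed

lemma asg_rels:
  assumes r: "r \<in> trels (tensor A B) C x"
  shows "frag_extend (asg B C) r \<in> trels A (tensor B C) x"
proof (rule trels_map[OF wAB wC zc_trels[OF wA wBC] _ r])
  note Z = zc_trels[OF wA wBC]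
  fix g assume "g \<in> trelgens (tensor A B) C x"
  then show "frag_extend (asg B C) g \<in> trels A (tensor B C) x"
    unfolding trelgens_def
  proof (elim UnE CollectE exE conjE)
    fix z t d d' w assume *: "g = frag_of (z, t, d \<otimes>\<^bsub>grp (tensor A B) z\<^esub> d', w) - frag_of (z, t, d, w) - frag_of (z, t, d', w)"
      "z * t = x" "d \<in> carrier (grp (tensor A B) z)" "d' \<in> carrier (grp (tensor A B) z)" "w \<in> carrier (grp C t)"
    let ?q = "rep d" and ?q' = "rep d'"
    have dd: "d \<otimes>\<^bsub>grp (tensor A B) z\<^esub> d' = tcls A B z (?q + ?q')"
      using tensor_rep[OF wA wB *(3)] tensor_rep[OF wA wB *(4)] mult_tensor[OF wA wB] by metis
    have "frag_extend (asg B C) g = frag_extend (asi B C t w) (rep (tcls A B z (?q + ?q')) - (?q + ?q'))"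
      unfolding *(1) dd by (simp add: frag_extend_diff frag_extend_add asg_def)
    then show ?thesis using asi_rels[OF *(5) rep_tcls[OF wA wB, of z "?q + ?q'"]] unfolding *(2) by simp
  next
    fix z t d w w' assume *: "g = frag_of (z, t, d, w \<otimes>\<^bsub>grp C t\<^esub> w') - frag_of (z, t, d, w) - frag_of (z, t, d, w')"
      "z * t = x" "d \<in> carrier (grp (tensor A B) z)" "w \<in> carrier (grp C t)" "w' \<in> carrier (grp C t)"
    have q: "Poly_Mapping.keys (rep d) \<subseteq> tgens A B z" using tensor_rep[OF wA wB *(3)] by (simp add: carrier_tfree)
    have "frag_extend (asi B C t (w \<otimes>\<^bsub>grp C t\<^esub> w')) (rep d) - frag_extend (asi B C t w) (rep d) - frag_extend (asi B C t w') (rep d) \<in> trels A (tensor B C) x"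
    proof (rule lin_N[OF Z q, where F = "\<lambda>q. frag_extend (asi B C t (w \<otimes>\<^bsub>grp C t\<^esub> w')) q - frag_extend (asi B C t w) q - frag_extend (asi B C t w') q"])
      fix k assume "k \<in> tgens A B z"
      then obtain z1 t1 a b where k: "k = (z1, t1, a, b)" "z1 * t1 = z" "a \<in> carrier (grp A z1)" "b \<in> carrier (grp B t1)"
        by (cases k) (auto simp: tgens_def)
      have i: "z1 * (t1 * t) = x" using k(2) *(2) by (simp add: mult.assoc[symmetric])
      from trelgen2[OF i k(3) Xcarr[OF k(4) *(4)] Xcarr[OF k(4) *(5)]]
      show "frag_extend (asi B C t (w \<otimes>\<^bsub>grp C t\<^esub> w')) (frag_of k) - frag_extend (asi B C t w) (frag_of k) - frag_extend (asi B C t w') (frag_of k) \<in> trels A (tensor B C) x"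
        by (simp add: k(1) asi_def Xmult2[OF k(4) *(4,5)])
    qed (simp_all add: frag_extend_diff)
    then show ?thesis unfolding *(1) by (simp add: frag_extend_diff asg_def)
  next
    fix u v w d c assume *: "g = frag_of (v * u, w, act (tensor A B) v u d, c) - frag_of (v, u * w, d, act C w u c)"
      "u * v * w = x" "d \<in> carrier (grp (tensor A B) v)" "c \<in> carrier (grp C w)"
    let ?q = "rep d"
    have q: "Poly_Mapping.keys ?q \<subseteq> tgens A B v" using tensor_rep[OF wA wB *(3)] by (simp add: carrier_tfree)
    let ?sq = "frag_extend (tsh A u) ?q"
    have ad: "act (tensor A B) v u d = tcls A B (v * u) ?sq" by (simp add: act_tensor)
    have c2: "act C w u c \<in> carrier (grp C (u * w))" using hmwf_act[OF wC *(4), of u] by (simp add: mult.commute)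
    have P1: "frag_extend (asi B C w c) (rep (act (tensor A B) v u d)) - frag_extend (asi B C w c) ?sq \<in> trels A (tensor B C) x"
      using asi_rels[OF *(4) rep_tcls[OF wA wB, of "v * u" ?sq]] *(2)
      by (simp add: ad frag_extend_diff ac_simps)
    have P2: "frag_extend (asi B C w c) ?sq - frag_extend (asi B C (u * w) (act C w u c)) ?q \<in> trels A (tensor B C) x"
      unfolding frag_extend_frag_extend
    proof (rule lin_N[OF Z q, where F = "\<lambda>q. frag_extend (\<lambda>k. frag_extend (asi B C w c) (tsh A u k)) q - frag_extend (asi B C (u * w) (act C w u c)) q"])
      fix k assume "k \<in> tgens A B v"
      then obtain z1 t1 a b where k: "k = (z1, t1, a, b)" "z1 * t1 = v" "a \<in> carrier (grp A z1)" "b \<in> carrier (grp B t1)"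
        by (cases k) (auto simp: tgens_def)
      let ?X = "tcls B C (t1 * w) (frag_of (t1, w, b, c))"
      have i: "u * z1 * (t1 * w) = x"
        by (subst *(2)[symmetric], subst k(2)[symmetric]) (simp add: ac_simps)
      have R: "frag_of (z1 * u, t1 * w, act A z1 u a, ?X) - frag_of (z1, u * (t1 * w), a, act (tensor B C) (t1 * w) u ?X) \<in> trels A (tensor B C) x"
        by (rule trelgen3[OF i k(3) Xcarr[OF k(4) *(4)]])
      have actX: "act (tensor B C) (t1 * w) u ?X = tcls B C (t1 * w * u) (frag_of (t1 * u, w, act B t1 u b, c))"
      proof -
        have "act (tensor B C) (t1 * w) u ?X = tcls B C (t1 * w * u) (frag_extend (tsh B u) (frag_of (t1, w, b, c)))"
          unfolding act_tensor by (rule tcls_rep_map[OF wB wC wB wC]) (rule tsh_rels[OF oB wC])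
        then show ?thesis by (simp add: tsh_def mult.commute mult.left_commute)
      qed
      have rel: "tcls B C (t1 * w * u) (frag_of (t1 * u, w, act B t1 u b, c)) = tcls B C (t1 * (u * w)) (frag_of (t1, u * w, b, act C w u c))"
      proof -
        have "frag_of (t1 * u, w, act B t1 u b, c) - frag_of (t1, u * w, b, act C w u c) \<in> trels B C (u * t1 * w)"
          by (rule trelgen3[OF refl k(4) *(4)])
        then have "frag_of (t1 * u, w, act B t1 u b, c) - frag_of (t1, u * w, b, act C w u c) \<in> trels B C (t1 * (u * w))"
          by (rule trels_idx) (simp add: ac_simps)
        then have "tcls B C (t1 * (u * w)) (frag_of (t1 * u, w, act B t1 u b, c)) = tcls B C (t1 * (u * w)) (frag_of (t1, u * w, b, act C w u c))"
          by (rule tcls_eqI[OF wB wC])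
        moreover have "t1 * w * u = t1 * (u * w)" by (simp add: ac_simps)
        ultimately show ?thesis by simp
      qed
      have e: "u * (t1 * w) = t1 * (u * w)" by (simp add: ac_simps)
      have "frag_extend (\<lambda>k. frag_extend (asi B C w c) (tsh A u k)) (frag_of k) - frag_extend (asi B C (u * w) (act C w u c)) (frag_of k)
          = frag_of (z1 * u, t1 * w, act A z1 u a, ?X) - frag_of (z1, u * (t1 * w), a, act (tensor B C) (t1 * w) u ?X)"
        unfolding actX rel e by (simp add: k(1) tsh_def asi_def)
      then show "frag_extend (\<lambda>k. frag_extend (asi B C w c) (tsh A u k)) (frag_of k) - frag_extend (asi B C (u * w) (act C w u c)) (frag_of k) \<in> trels A (tensor B C) x"
        using R by simp
    qed (simp_all add: frag_extend_diff)
    have "frag_extend (asg B C) g = (frag_extend (asi B C w c) (rep (act (tensor A B) v u d)) - frag_extend (asi B C w c) ?sq)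
        + (frag_extend (asi B C w c) ?sq - frag_extend (asi B C (u * w) (act C w u c)) ?q)"
      unfolding *(1) by (simp add: frag_extend_diff asg_def)
    then show ?thesis using zc_add[OF Z P1 P2] by simp
  qed
qed

end


lemma coh_assoc:
  fixes S :: "'s set" and \<pi> :: "'s \<Rightarrow> 'm::comm_monoid_mult" and T :: "'t set" and \<rho> :: "'t \<Rightarrow> 'm"
    and U :: "'u set" and \<sigma> :: "'u \<Rightarrow> 'm"
  assumes p: "p \<in> carrier (grp (zmod ((S \<times> T) \<times> U) (prod_over (prod_over \<pi> \<rho>) \<sigma>)) x)"
  shows "tassoc (zmod S \<pi>) (zmod T \<rho>) (zmod U \<sigma>) x
                   (tensor_hom (tensor (zmod S \<pi>) (zmod T \<rho>)) (zmod U \<sigma>) (zPhi S \<pi> T \<rho>) (\<lambda>y q. q) x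
                      (zPhi (S \<times> T) (prod_over \<pi> \<rho>) U \<sigma> x p))
       = tensor_hom (zmod S \<pi>) (tensor (zmod T \<rho>) (zmod U \<sigma>)) (\<lambda>y q. q) (zPhi T \<rho> U \<sigma>) x
                   (zPhi S \<pi> (T \<times> U) (prod_over \<rho> \<sigma>) x (zmap (\<lambda>((s, t), u). (s, (t, u))) x p))"
proof -
  let ?ZS = "zmod S \<pi>" and ?ZT = "zmod T \<rho>" and ?ZU = "zmod U \<sigma>"
  note w = hmwf_zmod and ok = hmok_zmod
  have wST: "hmwf (tensor ?ZS ?ZT)" by (rule hmwf_tensor[OF ok w])
  have wTU: "hmwf (tensor ?ZT ?ZU)" by (rule hmwf_tensor[OF ok w])
  let ?Q1 = "frag_extend (thg (zPhi S \<pi> T \<rho>) (\<lambda>y q. q)) (frag_extend (phig (prod_over \<pi> \<rho>) \<sigma>) p)"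
  let ?Q2 = "frag_extend (thg (\<lambda>y q. q) (zPhi T \<rho> U \<sigma>)) (frag_extend (phig \<pi> (prod_over \<rho> \<sigma>)) (zmap (\<lambda>((s, t), u). (s, (t, u))) x p))"
  have L1: "tensor_hom (tensor ?ZS ?ZT) ?ZU (zPhi S \<pi> T \<rho>) (\<lambda>y q. q) x (zPhi (S \<times> T) (prod_over \<pi> \<rho>) U \<sigma> x p)
      = tcls (tensor ?ZS ?ZT) ?ZU x ?Q1"
    unfolding zPhi_eq[of "S \<times> T"] by (rule tensor_hom_tcls[OF w w wST w hm_hom_zPhi hm_hom_id])
  have L2: "tassoc ?ZS ?ZT ?ZU x (tcls (tensor ?ZS ?ZT) ?ZU x ?Q1) = tcls ?ZS (tensor ?ZT ?ZU) x (frag_extend (asg ?ZT ?ZU) ?Q1)"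
    unfolding tassoc_eq by (rule tcls_rep_map[OF wST w w wTU]) (rule asg_rels[OF ok ok w])
  have R1: "tensor_hom ?ZS (tensor ?ZT ?ZU) (\<lambda>y q. q) (zPhi T \<rho> U \<sigma>) x (zPhi S \<pi> (T \<times> U) (prod_over \<rho> \<sigma>) x (zmap (\<lambda>((s, t), u). (s, (t, u))) x p))
      = tcls ?ZS (tensor ?ZT ?ZU) x ?Q2"
    unfolding zPhi_eq[of S] by (rule tensor_hom_tcls[OF w w w wTU hm_hom_id hm_hom_zPhi])
  have D: "frag_extend (asg ?ZT ?ZU) ?Q1 - ?Q2 \<in> trels ?ZS (tensor ?ZT ?ZU) x"
  proof (rule lin_N[OF zc_trels[OF w wTU], where F = "\<lambda>p. frag_extend (asg ?ZT ?ZU) (frag_extend (thg (zPhi S \<pi> T \<rho>) (\<lambda>y q. q)) (frag_extend (phig (prod_over \<pi> \<rho>) \<sigma>) p))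
      - frag_extend (thg (\<lambda>y q. q) (zPhi T \<rho> U \<sigma>)) (frag_extend (phig \<pi> (prod_over \<rho> \<sigma>)) (zmap (\<lambda>((s, t), u). (s, (t, u))) x p))"])
    show "Poly_Mapping.keys p \<subseteq> bas ((S \<times> T) \<times> U) (prod_over (prod_over \<pi> \<rho>) \<sigma>) x" using p by (simp add: carrier_zmod)
    fix k assume "k \<in> bas ((S \<times> T) \<times> U) (prod_over (prod_over \<pi> \<rho>) \<sigma>) x"
    then obtain u s t r where k: "k = (u, ((s, t), r))" "s \<in> S" "t \<in> T" "r \<in> U" "u * (\<pi> s * \<rho> t * \<sigma> r) = x"
      by (auto simp: prod_over_def)
    let ?e = "frag_of (u * \<pi> s, \<rho> t, frag_of (u, s), frag_of (1, t))"
    have zp: "zPhi S \<pi> T \<rho> (u * (\<pi> s * \<rho> t)) (frag_of (u, (s, t))) = tcls ?ZS ?ZT (u * (\<pi> s * \<rho> t)) ?e"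
      by (simp add: zPhi_eq phig_def)
    have zp2: "zPhi T \<rho> U \<sigma> (\<rho> t * \<sigma> r) (frag_of (1, (t, r))) = tcls ?ZT ?ZU (\<rho> t * \<sigma> r) (frag_of (\<rho> t, \<sigma> r, frag_of (1, t), frag_of (1, r)))"
      by (simp add: zPhi_eq phig_def)
    have rr: "frag_extend (asi ?ZT ?ZU (\<sigma> r) (frag_of (1, r))) (rep (tcls ?ZS ?ZT (u * (\<pi> s * \<rho> t)) ?e) - ?e) \<in> trels ?ZS (tensor ?ZT ?ZU) x"
    proof (rule trels_idx)
      show "frag_extend (asi ?ZT ?ZU (\<sigma> r) (frag_of (1, r))) (rep (tcls ?ZS ?ZT (u * (\<pi> s * \<rho> t)) ?e) - ?e) \<in> trels ?ZS (tensor ?ZT ?ZU) (u * (\<pi> s * \<rho> t) * \<sigma> r)"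
        by (rule asi_rels[OF ok ok w _ rep_tcls[OF w w]]) (use k in \<open>simp add: carrier_zmod keys_frag_of\<close>)
      show "u * (\<pi> s * \<rho> t) * \<sigma> r = x" using k(5) by (simp add: mult.assoc)
    qed
    have e3: "\<rho> t * \<sigma> r = \<rho> t * \<sigma> r" ..
    have "frag_extend (asg ?ZT ?ZU) (frag_extend (thg (zPhi S \<pi> T \<rho>) (\<lambda>y q. q)) (frag_extend (phig (prod_over \<pi> \<rho>) \<sigma>) (frag_of k)))
      - frag_extend (thg (\<lambda>y q. q) (zPhi T \<rho> U \<sigma>)) (frag_extend (phig \<pi> (prod_over \<rho> \<sigma>)) (zmap (\<lambda>((s, t), u). (s, (t, u))) x (frag_of k)))
      = frag_extend (asi ?ZT ?ZU (\<sigma> r) (frag_of (1, r))) (rep (tcls ?ZS ?ZT (u * (\<pi> s * \<rho> t)) ?e) - ?e)"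
      by (simp add: k(1) phig_def thg_def prod_over_def zp zp2 asg_def frag_extend_diff asi_def mult.assoc zmap_def)
    then show "frag_extend (asg ?ZT ?ZU) (frag_extend (thg (zPhi S \<pi> T \<rho>) (\<lambda>y q. q)) (frag_extend (phig (prod_over \<pi> \<rho>) \<sigma>) (frag_of k)))
      - frag_extend (thg (\<lambda>y q. q) (zPhi T \<rho> U \<sigma>)) (frag_extend (phig \<pi> (prod_over \<rho> \<sigma>)) (zmap (\<lambda>((s, t), u). (s, (t, u))) x (frag_of k)))
       \<in> trels ?ZS (tensor ?ZT ?ZU) x"
      using rr by simp
  qed (simp_all add: frag_extend_diff zmap_def)
  show ?thesis unfolding L1 L2 R1 by (rule tcls_eqI[OF w wTU D])
qed



theorem proposition4p2:
  fixes S :: "'s set" and \<pi>S :: "'s \<Rightarrow> 'm::comm_monoid_mult"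
    and T :: "'t set" and \<pi>T :: "'t \<Rightarrow> 'm"
    and U :: "'u set" and \<pi>U :: "'u \<Rightarrow> 'm"
    and S' :: "'s2 set" and \<pi>S' :: "'s2 \<Rightarrow> 'm"
    and T' :: "'t2 set" and \<pi>T' :: "'t2 \<Rightarrow> 'm"
  shows
    \<comment> \<open>the structure maps are isomorphisms of HM-modules\<close>
    "hm_iso (zmod (S \<times> T) (prod_over \<pi>S \<pi>T)) (tensor (zmod S \<pi>S) (zmod T \<pi>T)) (zPhi S \<pi>S T \<pi>T)
     \<and> hm_iso (zmod unit_set unit_over) (zunit :: ('m, int) hmmod) zPsi
     \<comment> \<open>naturality in S and T\<close>
     \<and> (\<forall>\<phi> \<chi>. over_hom S \<pi>S S' \<pi>S' \<phi> \<and> over_hom T \<pi>T T' \<pi>T' \<chi> \<longrightarrow>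
          hm_eq (zmod (S \<times> T) (prod_over \<pi>S \<pi>T))
            (\<lambda>x p. tensor_hom (zmod S' \<pi>S') (zmod T' \<pi>T') (zmap \<phi>) (zmap \<chi>) x (zPhi S \<pi>S T \<pi>T x p))
            (\<lambda>x p. zPhi S' \<pi>S' T' \<pi>T' x (zmap (map_prod \<phi> \<chi>) x p)))
     \<comment> \<open>associativity coherence\<close>
     \<and> hm_eq (zmod ((S \<times> T) \<times> U) (prod_over (prod_over \<pi>S \<pi>T) \<pi>U))
          (\<lambda>x p. tassoc (zmod S \<pi>S) (zmod T \<pi>T) (zmod U \<pi>U) x
                   (tensor_hom (tensor (zmod S \<pi>S) (zmod T \<pi>T)) (zmod U \<pi>U) (zPhi S \<pi>S T \<pi>T) (\<lambda>y q. q) x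
                      (zPhi (S \<times> T) (prod_over \<pi>S \<pi>T) U \<pi>U x p)))
          (\<lambda>x p. tensor_hom (zmod S \<pi>S) (tensor (zmod T \<pi>T) (zmod U \<pi>U)) (\<lambda>y q. q) (zPhi T \<pi>T U \<pi>U) x
                   (zPhi S \<pi>S (T \<times> U) (prod_over \<pi>T \<pi>U) x (zmap (\<lambda>((s, t), u). (s, (t, u))) x p)))
     \<comment> \<open>unit coherences\<close>
     \<and> hm_eq (zmod (S \<times> unit_set) (prod_over \<pi>S unit_over))
          (\<lambda>x p. runit (zmod S \<pi>S) x
                   (tensor_hom (zmod S \<pi>S) zunit (\<lambda>y q. q) zPsi x (zPhi S \<pi>S unit_set unit_over x p)))
          (zmap fst)
     \<and> hm_eq (zmod (unit_set \<times> S) (prod_over unit_over \<pi>S))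
          (\<lambda>x p. lunit (zmod S \<pi>S) x
                   (tensor_hom zunit (zmod S \<pi>S) zPsi (\<lambda>y q. q) x (zPhi unit_set unit_over S \<pi>S x p)))
          (zmap snd)
     \<comment> \<open>symmetry coherence\<close>
     \<and> hm_eq (zmod (S \<times> T) (prod_over \<pi>S \<pi>T))
          (\<lambda>x p. tswap (zmod S \<pi>S) (zmod T \<pi>T) x (zPhi S \<pi>S T \<pi>T x p))
          (\<lambda>x p. zPhi T \<pi>T S \<pi>S x (zmap prod.swap x p))"
proof (intro conjI allI impI)
  show "hm_iso (zmod (S \<times> T) (prod_over \<pi>S \<pi>T)) (tensor (zmod S \<pi>S) (zmod T \<pi>T)) (zPhi S \<pi>S T \<pi>T)"
    by (rule zPhi_iso)
  show "hm_iso (zmod unit_set unit_over) (zunit :: ('m, int) hmmod) zPsi"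
    by (rule zPsi_iso)
next
  fix \<phi> \<chi> assume h: "over_hom S \<pi>S S' \<pi>S' \<phi> \<and> over_hom T \<pi>T T' \<pi>T' \<chi>"
  show "hm_eq (zmod (S \<times> T) (prod_over \<pi>S \<pi>T))
            (\<lambda>x p. tensor_hom (zmod S' \<pi>S') (zmod T' \<pi>T') (zmap \<phi>) (zmap \<chi>) x (zPhi S \<pi>S T \<pi>T x p))
            (\<lambda>x p. zPhi S' \<pi>S' T' \<pi>T' x (zmap (map_prod \<phi> \<chi>) x p))"
    unfolding hm_eq_def using coh_nat[of S \<pi>S S' \<pi>S' \<phi> T \<pi>T T' \<pi>T' \<chi>] h by blast
next
  show "hm_eq (zmod ((S \<times> T) \<times> U) (prod_over (prod_over \<pi>S \<pi>T) \<pi>U))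
          (\<lambda>x p. tassoc (zmod S \<pi>S) (zmod T \<pi>T) (zmod U \<pi>U) x
                   (tensor_hom (tensor (zmod S \<pi>S) (zmod T \<pi>T)) (zmod U \<pi>U) (zPhi S \<pi>S T \<pi>T) (\<lambda>y q. q) x
                      (zPhi (S \<times> T) (prod_over \<pi>S \<pi>T) U \<pi>U x p)))
          (\<lambda>x p. tensor_hom (zmod S \<pi>S) (tensor (zmod T \<pi>T) (zmod U \<pi>U)) (\<lambda>y q. q) (zPhi T \<pi>T U \<pi>U) x
                   (zPhi S \<pi>S (T \<times> U) (prod_over \<pi>T \<pi>U) x (zmap (\<lambda>((s, t), u). (s, (t, u))) x p)))"
    unfolding hm_eq_def using coh_assoc by blast
  show "hm_eq (zmod (S \<times> unit_set) (prod_over \<pi>S unit_over))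
          (\<lambda>x p. runit (zmod S \<pi>S) x
                   (tensor_hom (zmod S \<pi>S) zunit (\<lambda>y q. q) zPsi x (zPhi S \<pi>S unit_set unit_over x p)))
          (zmap fst)"
    unfolding hm_eq_def using coh_runit by blast
  show "hm_eq (zmod (unit_set \<times> S) (prod_over unit_over \<pi>S))
          (\<lambda>x p. lunit (zmod S \<pi>S) x
                   (tensor_hom zunit (zmod S \<pi>S) zPsi (\<lambda>y q. q) x (zPhi unit_set unit_over S \<pi>S x p)))
          (zmap snd)"
    unfolding hm_eq_def using coh_lunit by blast
  show "hm_eq (zmod (S \<times> T) (prod_over \<pi>S \<pi>T))
          (\<lambda>x p. tswap (zmod S \<pi>S) (zmod T \<pi>T) x (zPhi S \<pi>S T \<pi>T x p))
          (\<lambda>x p. zPhi T \<pi>T S \<pi>S x (zmap prod.swap x p))"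
    unfolding hm_eq_def using coh_swap by blast
qed

end
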